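(* Assume $Y$ is an $r$-set, $Y=Y_1\times\dots\times Y_r\times Y_0$. Let $f\in L_2(X)$ and let $g_1^0,\dots,g_r^0:\mathbb{R}\to\mathbb{R}$ be such that $w_i(\mathbf{x})g_i^0(\mathbf{a}^i\cdot\mathbf{x})\in L_2(X)$, $i=1,\dots,r$; assume that for each $j$ and a.e. $y_j\in Y_j$ the quantity $\int_{Y^{(j)}}w_j^{*}(\mathbf{y})^2\,d\mathbf{y}^{(j)}$ is finite and positive. Then $\sum_{i=1}^r w_i(\mathbf{x})g_i^0(\mathbf{a}^i\cdot\mathbf{x})$ is a best $L_2(X)$ approximation to $f$ from $\mathcal{R}(\mathbf{a}^1,\dots,\mathbf{a}^r;w_1,\dots,w_r)$ if and only if, for each $j=1,\dots,r$ and a.e. $y_j\in Y_j$, $$g_j^0(y_j)=\frac{1}{\int_{Y^{(j)}}w_j^{*}(\mathbf{y})^2\,d\mathbf{y}^{(j)}}\int_{Y^{(j)}}\Big(f^*(\mathbf{y})-\sum_{i=1,\,i\ne j}^r w_i^*(\mathbf{y})g_i^0(y_i)\Big)w_j^*(\mathbf{y})\,d\mathbf{y}^{(j)}.$$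
   Context: Let $X\subset\mathbb{R}^n$ have finite Lebesgue measure, let $r\le n$, and let $\mathbf{a}^1,\dots,\mathbf{a}^r\in\mathbb{R}^n$ be linearly independent; complete them to a basis $\mathbf{a}^1,\dots,\mathbf{a}^n$ of $\mathbb{R}^n$. Let $J$ be the linear map $y_i=\mathbf{a}^i\cdot\mathbf{x}$, $i=1,\dots,n$, with inverse $x_i=\mathbf{b}^i\cdot\mathbf{y}$; set $Y=J(X)$ and $Y_i=\{\mathbf{a}^i\cdot\mathbf{x}:\mathbf{x}\in X\}\subset\mathbb{R}$. For a function $u$ on $X$ put $u^*(\mathbf{y})=u(\mathbf{b}^1\cdot\mathbf{y},\dots,\mathbf{b}^n\cdot\mathbf{y})$. $Y$ is called an $r$-set if $Y=Y_1\times\dots\times Y_r\times Y_0$ for some (measurable) $Y_0\subset\mathbb{R}^{n-r}$ (coordinates $y_{r+1},\dots,y_n$). For $j=1,\dots,r$, $Y^{(j)}=Y_1\times\dots\times Y_{j-1}\times Y_{j+1}\times\dots\times Y_r\times Y_0$, and $\int_{Y^{(j)}}\cdots\,d\mathbf{y}^{(j)}$ denotes integration over all coordinates of $\mathbf{y}$ except $y_j$, with $y_j$ held fixed. Fixed weight functions $w_1,\dots,w_r\in L_2(X)$ are given, and $\mathcal{R}(\mathbf{a}^1,\dots,\mathbf{a}^r;w_1,\dots,w_r)$ is the set of functions $\sum_{i=1}^r w_i(\mathbf{x})g_i(\mathbf{a}^i\cdot\mathbf{x})$ with $g_i:\mathbb{R}\to\mathbb{R}$ such that each $w_i(\mathbf{x})g_i(\mathbf{a}^i\cdot\mathbf{x})\in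 L_2(X)$. A best approximation is an element minimizing $\|f-g\|_{L_2(X)}$ over this set. *)

theory Defs
  imports "HOL-Analysis.Analysis"
begin

definition L2 :: "(real^'n) set \<Rightarrow> (real^'n \<Rightarrow> real) \<Rightarrow> bool" where
  "L2 X u \<longleftrightarrow> u \<in> borel_measurable (lebesgue_on X) \<and> integrable (lebesgue_on X) (\<lambda>x. (u x)^2)"

definition L2_dist :: "(real^'n) set \<Rightarrow> (real^'n \<Rightarrow> real) \<Rightarrow> (real^'n \<Rightarrow> real) \<Rightarrow> real" where
  "L2_dist X u v = sqrt (\<integral>x. (u x - v x)^2 \<partial>lebesgue_on X)"

text \<open>The set R(a^i, i in I; w_i, i in I); I is the set of the r distinguished indices.\<close>
definition ridge_set ::
  "(real^'n) set \<Rightarrow> 'n set \<Rightarrow> ('n \<Rightarrow> real^'n) \<Rightarrow> ('n \<Rightarrow> real^'n \<Rightarrow> real) \<Rightarrow> (real^'n \<Rightarrow> real) set" where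
  "ridge_set X I a w = {h. \<exists>g :: 'n \<Rightarrow> real \<Rightarrow> real.
      (\<forall>i\<in>I. L2 X (\<lambda>x. w i x * g i (a i \<bullet> x))) \<and> h = (\<lambda>x. \<Sum>i\<in>I. w i x * g i (a i \<bullet> x))}"

definition best_approx :: "(real^'n) set \<Rightarrow> (real^'n \<Rightarrow> real) set \<Rightarrow> (real^'n \<Rightarrow> real) \<Rightarrow> (real^'n \<Rightarrow> real) \<Rightarrow> bool" where
  "best_approx X R f h \<longleftrightarrow> h \<in> R \<and> (\<forall>h'\<in>R. L2_dist X f h \<le> L2_dist X f h')"

definition Jmat :: "('n \<Rightarrow> real^'n) \<Rightarrow> real^'n^'n" where
  "Jmat a = (\<chi> i. a i)"

definition ustar :: "('n::finite \<Rightarrow> real^'n) \<Rightarrow> (real^'n \<Rightarrow> real) \<Rightarrow> real^'n \<Rightarrow> real" where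
  "ustar a u y = u (matrix_inv (Jmat a) *v y)"

definition proj_set :: "(real^'n) set \<Rightarrow> ('n \<Rightarrow> real^'n) \<Rightarrow> 'n \<Rightarrow> real set" where
  "proj_set X a i = (\<lambda>x. a i \<bullet> x) ` X"

definition ext :: "'n::finite \<Rightarrow> real \<Rightarrow> ('n \<Rightarrow> real) \<Rightarrow> real^'n" where
  "ext j t z = (\<chi> k. if k = j then t else z k)"

text \<open>Y^(j) = prod_{k in I-{j}} Y_k x Y_0, as a set of coordinate functions on UNIV - {j}.\<close>
definition fibre_set :: "'n set \<Rightarrow> ('n \<Rightarrow> real set) \<Rightarrow> ('n \<Rightarrow> real) set \<Rightarrow> 'n \<Rightarrow> ('n \<Rightarrow> real) set" where
  "fibre_set I Ys Y0 j = {z. (\<forall>k\<in>I - {j}. z k \<in> Ys k) \<and> restrict z (- I) \<in> Y0}"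

definition Mfib :: "'n::finite \<Rightarrow> ('n \<Rightarrow> real) measure" where
  "Mfib j = completion (PiM (UNIV - {j}) (\<lambda>_. lborel))"

end

theory Submission
  imports Defs
begin

lemma linear_measure_const:
  fixes f :: "real^'n::finite \<Rightarrow> real^'n"
  assumes "linear f"
  shows "\<exists>c\<ge>0. \<forall>S\<in>lmeasurable. f ` S \<in> lmeasurable \<and> measure lebesgue (f ` S) = c * measure lebesgue S"
proof (rule induct_linear_elementary[OF assms])
  fix f g :: "real^'n \<Rightarrow> real^'n"
  assume "linear f" "linear g"
    and "\<exists>c\<ge>0. \<forall>S\<in>lmeasurable. f ` S \<in> lmeasurable \<and> measure lebesgue (f ` S) = c * measure lebesgue S"
    and "\<exists>c\<ge>0. \<forall>S\<in>lmeasurable. g ` S \<in> lmeasurable \<and> measure lebesgue (g ` S) = c * measure lebesgue S"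
  then obtain cf cg where cf: "cf \<ge> 0" "\<forall>S\<in>lmeasurable. f ` S \<in> lmeasurable \<and> measure lebesgue (f ` S) = cf * measure lebesgue S"
    and cg: "cg \<ge> 0" "\<forall>S\<in>lmeasurable. g ` S \<in> lmeasurable \<and> measure lebesgue (g ` S) = cg * measure lebesgue S"
    by blast
  show "\<exists>c\<ge>0. \<forall>S\<in>lmeasurable. (f \<circ> g) ` S \<in> lmeasurable \<and> measure lebesgue ((f \<circ> g) ` S) = c * measure lebesgue S"
  proof (intro exI[of _ "cf * cg"] conjI ballI)
    fix S :: "(real^'n) set" assume S: "S \<in> lmeasurable"
    have gS: "g ` S \<in> lmeasurable" "measure lebesgue (g ` S) = cg * measure lebesgue S" using cg S by auto
    have e: "(f \<circ> g) ` S = f ` (g ` S)" by (rule image_comp[symmetric])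
    have fgS: "f ` (g ` S) \<in> lmeasurable" "measure lebesgue (f ` (g ` S)) = cf * measure lebesgue (g ` S)"
      using cf(2) gS(1) by blast+
    show "(f \<circ> g) ` S \<in> lmeasurable" unfolding e by (rule fgS(1))
    show "measure lebesgue ((f \<circ> g) ` S) = cf * cg * measure lebesgue S"
      unfolding e fgS(2) gS(2) by (rule mult.assoc[symmetric])
  qed (use cf cg in simp)
next
  fix f :: "real^'n \<Rightarrow> real^'n" and i
  assume "linear f" and 0: "\<And>x. f x $ i = 0"
  then have "\<not> inj f"
    by (metis (full_types) linear_injective_imp_surjective one_neq_zero surjE vec_component)
  show "\<exists>c\<ge>0. \<forall>S\<in>lmeasurable. f ` S \<in> lmeasurable \<and> measure lebesgue (f ` S) = c * measure lebesgue S"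
  proof (intro exI[of _ 0] conjI ballI)
    fix S :: "(real^'n) set" assume "S \<in> lmeasurable"
    show "f ` S \<in> lmeasurable"
      using lmeasurable_iff_indicator_has_integral \<open>linear f\<close> \<open>\<not> inj f\<close> negligible_UNIV negligible_linear_singular_image by blast
    show "measure lebesgue (f ` S) = 0 * measure lebesgue S"
      by (simp, meson \<open>\<not> inj f\<close> \<open>linear f\<close> negligible_imp_measure0 negligible_linear_singular_image)
  qed simp
next
  fix c :: "'n \<Rightarrow> real"
  show "\<exists>d\<ge>0. \<forall>S\<in>lmeasurable. (\<lambda>x. \<chi> i. c i * x $ i) ` S \<in> lmeasurable \<and> measure lebesgue ((\<lambda>x. \<chi> i. c i * x $ i) ` S) = d * measure lebesgue S"
    by (intro exI[of _ "\<bar>prod c UNIV\<bar>"]) (auto simp: measurable_stretch measure_stretch)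
next
  fix m n :: "'n"
  assume "m \<noteq> n"
  let ?h = "\<lambda>v::(real, 'n) vec. \<chi> i. v $ Transposition.transpose m n i"
  have lin: "linear ?h"
    by (rule linearI) (simp_all add: plus_vec_def scaleR_vec_def)
  have meq: "measure lebesgue (?h ` cbox a b) = measure lebesgue (cbox a b)" for a b
  proof (cases "cbox a b = {}")
    case True then show ?thesis
      by simp
  next
    case False
    then have him: "?h ` (cbox a b) \<noteq> {}"
      by blast
    have eq: "?h ` (cbox a b) = cbox (?h a) (?h b)"
      by (auto simp: image_iff lambda_swap_Galois mem_box_cart) (metis transpose_involutory)+
    show ?thesis
      using him prod.permute [OF permutes_swap_id, where S=UNIV and g="\<lambda>i. (b - a)$i", symmetric]
      by (simp add: eq content_cbox_cart False)
  qed
  show "\<exists>c\<ge>0. \<forall>S\<in>lmeasurable. ?h ` S \<in> lmeasurable \<and> measure lebesgue (?h ` S) = c * measure lebesgue S"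
  proof (intro exI[of _ 1] conjI ballI)
    fix S :: "(real^'n) set" assume S: "S \<in> lmeasurable"
    have *: "?h ` S \<in> lmeasurable \<and> 1 * measure lebesgue S = measure lebesgue (?h ` S)"
      by (rule measure_linear_sufficient[OF lin S]) (simp add: meq)
    then show "?h ` S \<in> lmeasurable" "measure lebesgue (?h ` S) = 1 * measure lebesgue S" by simp_all
  qed simp
next
  fix m n :: "'n"
  assume "m \<noteq> n"
  let ?h = "\<lambda>v::(real, 'n) vec. \<chi> i. if i = m then v $ m + v $ n else v $ i"
  have lin: "linear ?h"
    by (rule linearI) (auto simp: algebra_simps plus_vec_def scaleR_vec_def vec_eq_iff)
  have meq: "measure lebesgue (?h ` (cbox a b)) = measure lebesgue (cbox a b)" for a b
  proof (cases "cbox a b = {}")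
    case True then show ?thesis by simp
  next
    case False
    then have ne: "(+) (\<chi> i. if i = n then - a $ n else 0) ` cbox a b \<noteq> {}"
      by auto
    let ?v = "\<chi> i. if i = n then - a $ n else 0"
    have "?h ` cbox a b
          = (+) (\<chi> i. if i = m \<or> i = n then a $ n else 0) ` ?h ` (+) ?v ` (cbox a b)"
      using \<open>m \<noteq> n\<close> unfolding image_comp o_def by (force simp: vec_eq_iff)
    then have "measure lebesgue (?h ` (cbox a b))
             = measure lebesgue ((\<lambda>v. \<chi> i. if i = m then v $ m + v $ n else v $ i) `
                                 (+) ?v ` cbox a b)"
      by (rule ssubst) (rule measure_translation)
    also have "\<dots> = measure lebesgue ((\<lambda>v. \<chi> i. if i = m then v $ m + v $ n else v $ i) ` cbox (?v +a) (?v + b))"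
      by (metis (no_types, lifting) cbox_translation)
    also have "\<dots> = measure lebesgue ((+) ?v ` cbox a b)"
      apply (subst measure_shear_interval)
      using \<open>m \<noteq> n\<close> ne apply auto
      apply (simp add: cbox_translation)
      by (metis cbox_borel cbox_translation measure_completion sets_lborel)
    also have "\<dots> = measure lebesgue (cbox a b)"
      by (rule measure_translation)
    finally show ?thesis .
  qed
  show "\<exists>c\<ge>0. \<forall>S\<in>lmeasurable. ?h ` S \<in> lmeasurable \<and> measure lebesgue (?h ` S) = c * measure lebesgue S"
  proof (intro exI[of _ 1] conjI ballI)
    fix S :: "(real^'n) set" assume S: "S \<in> lmeasurable"
    have *: "?h ` S \<in> lmeasurable \<and> 1 * measure lebesgue S = measure lebesgue (?h ` S)"
      by (rule measure_linear_sufficient[OF lin S]) (simp add: meq)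
    then show "?h ` S \<in> lmeasurable" "measure lebesgue (?h ` S) = 1 * measure lebesgue S" by simp_all
  qed simp
qed

lemma lebesgue_linear_distr:
  fixes L :: "real^'n::finite \<Rightarrow> real^'n"
  assumes lin: "linear L" "linear L'" and inv: "\<And>x. L' (L x) = x" "\<And>y. L (L' y) = y"
  shows "\<exists>k>0. L \<in> lebesgue \<rightarrow>\<^sub>M lebesgue \<and> distr lebesgue lebesgue L = density lebesgue (\<lambda>_. ennreal k)"
proof -
  obtain c where c0: "c \<ge> 0" and c: "\<And>S. S \<in> lmeasurable \<Longrightarrow> L' ` S \<in> lmeasurable \<and> measure lebesgue (L' ` S) = c * measure lebesgue S"
    using linear_measure_const[OF lin(2)] by blast
  have "L ` cbox 0 One \<in> lmeasurable"
    by (rule measurable_linear_image_interval[OF lin(1)])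
  moreover have "L' ` (L ` cbox 0 One) = cbox 0 One"
    using inv by (force simp: image_comp)
  ultimately have "measure lebesgue (cbox 0 (One::real^'n)) = c * measure lebesgue (L ` cbox 0 One)"
    using c by metis
  moreover have "measure lebesgue (cbox 0 (One::real^'n)) = 1"
    by (metis cbox_borel content_unit measure_completion sets_lborel measure_lborel_cbox_eq)
  ultimately have "c \<noteq> 0" by auto
  with c0 have cpos: "c > 0" by simp
  have main: "L' ` A \<in> sets lebesgue \<and> emeasure lebesgue (L' ` A) = ennreal c * emeasure lebesgue A"
    if A: "A \<in> sets lebesgue" for A
  proof -
    define B where "B n = A \<inter> cball 0 (real n)" for n :: nat
    have Bm: "B n \<in> lmeasurable" for n
      unfolding B_def by (rule bounded_set_imp_lmeasurable) (auto intro: A bounded_Int)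
    have LB: "L' ` B n \<in> lmeasurable" "measure lebesgue (L' ` B n) = c * measure lebesgue (B n)" for n
      using c[OF Bm] by auto
    have UB: "(\<Union>n. B n) = A"
      by (auto simp: B_def) (meson mem_cball_0 real_arch_simple)
    have LUB: "(\<Union>n. L' ` B n) = L' ` A"
      using UB by blast
    have incB: "incseq B"
      by (auto simp: incseq_def B_def)
    have incLB: "incseq (\<lambda>n. L' ` B n)"
      using incB by (auto simp: incseq_def)
    have S1: "L' ` A \<in> sets lebesgue"
      unfolding LUB[symmetric] using LB by (intro sets.countable_UN') auto
    have "emeasure lebesgue (L' ` A) = (SUP n. emeasure lebesgue (L' ` B n))"
      unfolding LUB[symmetric] by (rule SUP_emeasure_incseq[symmetric]) (use LB incLB in auto)
    also have "\<dots> = (SUP n. ennreal c * emeasure lebesgue (B n))"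
      using LB Bm by (intro SUP_cong refl) (simp add: emeasure_eq_measure2 ennreal_mult c0)
    also have "\<dots> = ennreal c * (SUP n. emeasure lebesgue (B n))"
      by (rule SUP_mult_left_ennreal[symmetric])
    also have "(SUP n. emeasure lebesgue (B n)) = emeasure lebesgue A"
      unfolding UB[symmetric] by (rule SUP_emeasure_incseq) (use Bm incB in auto)
    finally show ?thesis using S1 by simp
  qed
  have pre: "L -` A \<inter> space lebesgue = L' ` A" for A
    using inv by (auto simp: image_iff) metis
  have meas: "L \<in> lebesgue \<rightarrow>\<^sub>M lebesgue"
  proof (rule measurableI)
    fix A :: "(real^'n) set" assume "A \<in> sets lebesgue"
    then show "L -` A \<inter> space lebesgue \<in> sets lebesgue" unfolding pre using main by blast
  qed simp
  have "distr lebesgue lebesgue L = density lebesgue (\<lambda>_. ennreal c)"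
  proof (rule measure_eqI)
    fix A assume "A \<in> sets (distr lebesgue lebesgue L)"
    then have A: "A \<in> sets lebesgue" by simp
    show "emeasure (distr lebesgue lebesgue L) A = emeasure (density lebesgue (\<lambda>_. ennreal c)) A"
      using A meas main[OF A] pre[of A] by (simp add: emeasure_distr emeasure_density_const del: emeasure_completion)
  qed simp
  with meas cpos show ?thesis by blast
qed



lemma completion_AE_measurable:
  assumes g: "g \<in> M \<rightarrow>\<^sub>M N" and ae: "AE x in M. f x = g x" and sp: "\<And>x. x \<in> space M \<Longrightarrow> f x \<in> space N"
  shows "f \<in> completion M \<rightarrow>\<^sub>M N"
proof (rule measurableI)
  obtain Z where Z: "Z \<in> null_sets M" "{x\<in>space M. f x \<noteq> g x} \<subseteq> Z"
    using ae by (auto elim!: AE_E)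
  fix B assume B: "B \<in> sets N"
  have "f -` B \<inter> space (completion M) = ((g -` B \<inter> space M) - Z) \<union> (f -` B \<inter> space M \<inter> Z)"
    using Z by auto
  moreover have "(g -` B \<inter> space M) - Z \<in> sets (completion M)"
    using g B Z by (intro sets_completionI_sets) (auto intro: measurable_sets)
  moreover have "f -` B \<inter> space M \<inter> Z \<in> sets (completion M)"
  proof -
    have "f -` B \<inter> space M \<inter> Z \<in> null_sets (completion M)"
      by (rule null_sets_completion_subset[of _ Z]) (use Z in \<open>auto intro: null_sets_completionI\<close>)
    then show ?thesis by auto
  qed
  ultimately show "f -` B \<inter> space (completion M) \<in> sets (completion M)" by (metis (no_types) sets.Un space_completion)
qed (use sp in simp)

definition PP :: "'n::finite \<Rightarrow> (real \<times> ('n \<Rightarrow> real)) measure" where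
  "PP j = lborel \<Otimes>\<^sub>M PiM (UNIV - {j}) (\<lambda>_. lborel)"

lemma ext_nth: "ext j t z $ i = (if i = j then t else z i)"
  by (simp add: ext_def)

lemma ext_measurable[measurable]: "(\<lambda>p. ext j (fst p) (snd p)) \<in> PP j \<rightarrow>\<^sub>M (borel :: (real^'n::finite) measure)"
proof (subst borel_measurable_euclidean_space, intro ballI)
  fix b :: "real^'n" assume "b \<in> Basis"
  then obtain i where b: "b = axis i 1" using axis_inverse[of b] by auto
  have "(\<lambda>p. ext j (fst p) (snd p) \<bullet> b) = (\<lambda>p. if i = j then fst p else snd p i)"
    by (auto simp: b cart_eq_inner_axis[symmetric] ext_nth)
  moreover have "(\<lambda>p. if i = j then fst p else snd p i) \<in> borel_measurable (PP j)"
  proof (cases "i = j")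
    case True
    have "fst \<in> PP j \<rightarrow>\<^sub>M lborel" unfolding PP_def by (rule measurable_fst)
    then show ?thesis using True by (simp add: measurable_lborel2)
  next
    case False
    have "(\<lambda>p. snd p i) \<in> PP j \<rightarrow>\<^sub>M lborel" unfolding PP_def
      by (rule measurable_compose[OF measurable_snd measurable_component_singleton]) (use False in simp)
    then show ?thesis using False by (simp add: measurable_lborel2)
  qed
  ultimately show "(\<lambda>p. ext j (fst p) (snd p) \<bullet> b) \<in> borel_measurable (PP j)" by simp
qed

lemma prod_Basis_cart: "(\<Prod>b\<in>Basis. (u - l) \<bullet> b) = (\<Prod>i\<in>UNIV. u $ i - (l::real^'n::finite) $ i)"
proof -
  have "(\<Prod>b\<in>Basis. (u - l) \<bullet> b) = (\<Prod>i\<in>UNIV. (u - l) \<bullet> axis i 1)"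
  proof (rule prod.reindex_cong)
    show "inj_on (\<lambda>i::'n. axis i (1::real)) UNIV" by (auto intro!: inj_onI simp: axis_eq_axis)
    show "Basis = range (\<lambda>i::'n. axis i (1::real))"
      by (auto simp: Basis_vec_def)
  qed simp
  then show ?thesis by (simp add: cart_eq_inner_axis[symmetric])
qed

lemma distr_PP: "distr (PP j) borel (\<lambda>p. ext j (fst p) (snd p)) = (lborel :: (real^'n::finite) measure)"
proof (rule lborel_eqI[symmetric])
  interpret P: product_sigma_finite "\<lambda>_::'n. lborel :: real measure" by standard
  interpret F: finite_product_sigma_finite "\<lambda>_::'n. lborel :: real measure" "UNIV - {j}" by standard simp
  interpret PS: pair_sigma_finite lborel "PiM (UNIV - {j}) (\<lambda>_::'n. lborel :: real measure)" by standard
  fix l u :: "real^'n" assume lu: "\<And>b. b \<in> Basis \<Longrightarrow> l \<bullet> b \<le> u \<bullet> b"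
  have luc: "l $ i \<le> u $ i" for i using lu[of "axis i 1"] by (simp add: cart_eq_inner_axis)
  have pre: "(\<lambda>p. ext j (fst p) (snd p)) -` box l u \<inter> space (PP j)
      = {l$j <..< u$j} \<times> PiE (UNIV - {j}) (\<lambda>i. {l$i <..< u$i})"
  proof (intro set_eqI iffI)
    fix p :: "real \<times> ('n \<Rightarrow> real)"
    assume "p \<in> (\<lambda>p. ext j (fst p) (snd p)) -` box l u \<inter> space (PP j)"
    then have 1: "\<forall>i. l $ i < ext j (fst p) (snd p) $ i \<and> ext j (fst p) (snd p) $ i < u $ i"
      and 2: "snd p \<in> PiE (UNIV - {j}) (\<lambda>_. UNIV)"
      by (auto simp: PP_def space_pair_measure space_PiM mem_box_cart)
    have "fst p \<in> {l$j <..< u$j}" using 1[rule_format, of j] by (simp add: ext_nth)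
    moreover have "snd p \<in> PiE (UNIV - {j}) (\<lambda>i. {l$i <..< u$i})"
    proof -
      have "\<forall>i\<in>UNIV-{j}. snd p i \<in> {l$i<..<u$i}"
      proof
        fix i assume "i \<in> UNIV - {j}" then show "snd p i \<in> {l$i<..<u$i}"
          using 1[rule_format, of i] by (simp add: ext_nth)
      qed
      then show ?thesis using 2 by (simp add: PiE_iff)
    qed
    ultimately show "p \<in> {l$j <..< u$j} \<times> PiE (UNIV - {j}) (\<lambda>i. {l$i <..< u$i})"
      by (cases p) simp
  next
    fix p :: "real \<times> ('n \<Rightarrow> real)"
    assume "p \<in> {l$j <..< u$j} \<times> PiE (UNIV - {j}) (\<lambda>i. {l$i <..< u$i})"
    then show "p \<in> (\<lambda>p. ext j (fst p) (snd p)) -` box l u \<inter> space (PP j)"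
      by (cases p) (auto simp: PP_def space_pair_measure space_PiM mem_box_cart ext_nth PiE_iff)
  qed
  have "emeasure (distr (PP j) borel (\<lambda>p. ext j (fst p) (snd p))) (box l u)
      = emeasure (PP j) ({l$j <..< u$j} \<times> PiE (UNIV - {j}) (\<lambda>i. {l$i <..< u$i}))"
    by (subst emeasure_distr) (simp_all add: pre[symmetric])
  also have "\<dots> = emeasure lborel {l$j <..< u$j} * emeasure (PiM (UNIV - {j}) (\<lambda>_::'n. lborel :: real measure)) (PiE (UNIV - {j}) (\<lambda>i. {l$i <..< u$i}))"
    unfolding PP_def by (rule F.emeasure_pair_measure_Times) auto
  also have "\<dots> = ennreal (u$j - l$j) * (\<Prod>i\<in>UNIV - {j}. ennreal (u$i - l$i))"
    by (subst P.emeasure_PiM) (auto simp: luc)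
  also have "\<dots> = ennreal (\<Prod>i\<in>UNIV. u$i - l$i)"
    by (simp add: prod_ennreal luc ennreal_mult[symmetric] prod.remove[of UNIV j] prod_nonneg)
  finally show "emeasure (distr (PP j) borel (\<lambda>p. ext j (fst p) (snd p))) (box l u) = ennreal (\<Prod>b\<in>Basis. (u - l) \<bullet> b)"
    by (simp add: prod_Basis_cart)
qed simp

lemma PP_null:
  assumes N: "N \<in> null_sets (lborel :: (real^'n::finite) measure)"
  shows "AE p in PP j. ext j (fst p) (snd p) \<notin> N"
proof -
  have "(\<lambda>p. ext j (fst p) (snd p)) -` N \<inter> space (PP j) \<in> null_sets (PP j)"
  proof -
    have Nb: "N \<in> sets borel" using N by (simp add: null_sets_def)
    have "emeasure (PP j) ((\<lambda>p. ext j (fst p) (snd p)) -` N \<inter> space (PP j))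
        = emeasure (distr (PP j) borel (\<lambda>p. ext j (fst p) (snd p))) N"
      using Nb by (subst emeasure_distr) auto
    also have "\<dots> = 0" using null_setsD1[OF N] by (simp add: distr_PP)
    finally show ?thesis using Nb by (auto simp: null_sets_def)
  qed
  then show ?thesis
    by (rule AE_I') auto
qed

lemma fub_nn:
  fixes u :: "real^'n::finite \<Rightarrow> ennreal"
  assumes u: "u \<in> borel_measurable lebesgue"
  shows "\<exists>W \<in> borel_measurable lborel. (\<integral>\<^sup>+ y. u y \<partial>lebesgue) = (\<integral>\<^sup>+ t. W t \<partial>lborel)
           \<and> (AE t in lborel. (\<lambda>z. u (ext j t z)) \<in> borel_measurable (Mfib j) \<and> W t = (\<integral>\<^sup>+ z. u (ext j t z) \<partial>Mfib j))"
proof -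
  interpret F: finite_product_sigma_finite "\<lambda>_::'n. lborel :: real measure" "UNIV - {j}" by standard simp
  interpret PS: pair_sigma_finite lborel "PiM (UNIV - {j}) (\<lambda>_::'n. lborel :: real measure)" by standard
  obtain ub where ub: "ub \<in> borel_measurable lborel" and ae: "AE y in lborel. u y = ub y"
    using completion_ex_borel_measurable[OF u] by blast
  have ubb[measurable]: "ub \<in> borel_measurable borel" using ub by simp
  obtain N where N: "N \<in> null_sets lborel" "{y\<in>space lborel. u y \<noteq> ub y} \<subseteq> N"
    using ae unfolding eventually_ae_filter by blast
  define W where "W t = (\<integral>\<^sup>+ z. ub (ext j t z) \<partial>PiM (UNIV - {j}) (\<lambda>_::'n. lborel :: real measure))" for t
  have Pm: "(\<lambda>p. ub (ext j (fst p) (snd p))) \<in> borel_measurable (lborel \<Otimes>\<^sub>M PiM (UNIV - {j}) (\<lambda>_::'n. lborel :: real measure))"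
    using measurable_compose[OF ext_measurable ubb] unfolding PP_def .
  have Wm: "W \<in> borel_measurable lborel"
    unfolding W_def using F.borel_measurable_nn_integral_fst[OF Pm] by simp
  have "(\<integral>\<^sup>+ y. u y \<partial>lebesgue) = (\<integral>\<^sup>+ y. ub y \<partial>lborel)"
    by (simp add: nn_integral_completion ae nn_integral_cong_AE)
  also have "\<dots> = (\<integral>\<^sup>+ y. ub y \<partial>distr (PP j) borel (\<lambda>p. ext j (fst p) (snd p)))"
    by (simp add: distr_PP)
  also have "\<dots> = (\<integral>\<^sup>+ p. ub (ext j (fst p) (snd p)) \<partial>PP j)"
    by (rule nn_integral_distr) auto
  also have "\<dots> = (\<integral>\<^sup>+ t. W t \<partial>lborel)"
    unfolding PP_def W_def using F.nn_integral_fst[OF Pm] by simp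
  finally have eq: "(\<integral>\<^sup>+ y. u y \<partial>lebesgue) = (\<integral>\<^sup>+ t. W t \<partial>lborel)" .
  have "AE p in PP j. ext j (fst p) (snd p) \<notin> N" by (rule PP_null[OF N(1)])
  then have "AE p in lborel \<Otimes>\<^sub>M PiM (UNIV - {j}) (\<lambda>_::'n. lborel :: real measure). u (ext j (fst p) (snd p)) = ub (ext j (fst p) (snd p))"
    unfolding PP_def by eventually_elim (use N(2) in auto)
  from PS.AE_pair[OF this]
  have "AE t in lborel. (\<lambda>z. u (ext j t z)) \<in> borel_measurable (Mfib j) \<and> W t = (\<integral>\<^sup>+ z. u (ext j t z) \<partial>Mfib j)"
  proof eventually_elim
    case (elim t)
    have m1: "(\<lambda>z. ub (ext j t z)) \<in> borel_measurable (PiM (UNIV - {j}) (\<lambda>_::'n. lborel :: real measure))"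
      using measurable_Pair2[OF Pm, of t] by simp
    have m2: "(\<lambda>z. u (ext j t z)) \<in> borel_measurable (Mfib j)"
      unfolding Mfib_def by (rule completion_AE_measurable[OF m1]) (use elim in auto)
    have "(\<integral>\<^sup>+ z. u (ext j t z) \<partial>Mfib j) = (\<integral>\<^sup>+ z. ub (ext j t z) \<partial>Mfib j)"
      unfolding Mfib_def by (rule nn_integral_cong_AE) (use elim in \<open>auto intro: AE_completion\<close>)
    also have "\<dots> = W t" unfolding Mfib_def W_def by (rule nn_integral_completion)
    finally show ?case using m2 by simp
  qed
  with eq Wm show ?thesis by blast
qed

lemma fub_int:
  fixes u :: "real^'n::finite \<Rightarrow> real"
  assumes u: "integrable lebesgue u"
  shows "\<exists>F \<in> borel_measurable lborel. integrable lborel F \<and> (\<integral> y. u y \<partial>lebesgue) = (\<integral> t. F t \<partial>lborel)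
           \<and> (AE t in lborel. integrable (Mfib j) (\<lambda>z. u (ext j t z)) \<and> F t = (\<integral> z. u (ext j t z) \<partial>Mfib j))"
proof -
  interpret F: finite_product_sigma_finite "\<lambda>_::'n. lborel :: real measure" "UNIV - {j}" by standard simp
  interpret PS: pair_sigma_finite lborel "PiM (UNIV - {j}) (\<lambda>_::'n. lborel :: real measure)" by standard
  have um: "u \<in> borel_measurable lebesgue" using u by auto
  obtain ub where ub: "ub \<in> borel_measurable lborel" and ae: "AE y in lborel. u y = ub y"
    using completion_ex_borel_measurable_real[OF um] by blast
  have ubb[measurable]: "ub \<in> borel_measurable borel" using ub by simp
  obtain N where N: "N \<in> null_sets lborel" "{y\<in>space lborel. u y \<noteq> ub y} \<subseteq> N"
    using ae unfolding eventually_ae_filter by blast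
  have ubi: "integrable lborel ub"
  proof -
    have "integrable lebesgue ub"
      using u by (rule integrable_cong_AE_imp) (use ae in \<open>auto intro: AE_completion measurable_completion\<close>)
    then show ?thesis using integrable_completion[of ub lborel] ub by simp
  qed
  have int1: "(\<integral> y. u y \<partial>lebesgue) = (\<integral> y. ub y \<partial>lborel)"
  proof -
    have "(\<integral> y. u y \<partial>lebesgue) = (\<integral> y. ub y \<partial>lebesgue)"
      by (rule integral_cong_AE) (use ae um ub in \<open>auto intro: AE_completion measurable_completion\<close>)
    then show ?thesis using integral_completion[of ub lborel] ub by simp
  qed
  let ?M2 = "PiM (UNIV - {j}) (\<lambda>_::'n. lborel :: real measure)"
  have Pm: "(\<lambda>p. ub (ext j (fst p) (snd p))) \<in> borel_measurable (lborel \<Otimes>\<^sub>M ?M2)"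
    using measurable_compose[OF ext_measurable ubb] unfolding PP_def .
  have Pi: "integrable (lborel \<Otimes>\<^sub>M ?M2) (\<lambda>p. ub (ext j (fst p) (snd p)))"
  proof -
    have "integrable (distr (PP j) borel (\<lambda>p. ext j (fst p) (snd p))) ub" using ubi by (simp add: distr_PP)
    then show ?thesis by (subst (asm) integrable_distr_eq) (use ext_measurable[of j] in \<open>auto simp: PP_def\<close>)
  qed
  have int2: "(\<integral> y. ub y \<partial>lborel) = (\<integral> p. ub (ext j (fst p) (snd p)) \<partial>(lborel \<Otimes>\<^sub>M ?M2))"
  proof -
    have "(\<integral> y. ub y \<partial>lborel) = (\<integral> y. ub y \<partial>distr (PP j) borel (\<lambda>p. ext j (fst p) (snd p)))" by (simp add: distr_PP)
    also have "\<dots> = (\<integral> p. ub (ext j (fst p) (snd p)) \<partial>PP j)" by (rule integral_distr) auto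
    finally show ?thesis by (simp add: PP_def)
  qed
  define F where "F t = (\<integral> z. ub (ext j t z) \<partial>?M2)" for t
  have Fm: "F \<in> borel_measurable lborel"
  proof -
    have Pm': "(\<lambda>(t,z). ub (ext j t z)) \<in> borel_measurable (lborel \<Otimes>\<^sub>M ?M2)"
      using Pm by (simp add: split_beta')
    show ?thesis unfolding F_def by (rule F.borel_measurable_lebesgue_integral[OF Pm'])
  qed
  have Fi: "integrable lborel F"
    unfolding F_def using PS.integrable_fst'[OF Pi] by simp
  have int3: "(\<integral> p. ub (ext j (fst p) (snd p)) \<partial>(lborel \<Otimes>\<^sub>M ?M2)) = (\<integral> t. F t \<partial>lborel)"
    unfolding F_def using PS.integral_fst'[OF Pi] by simp
  have "AE p in PP j. ext j (fst p) (snd p) \<notin> N" by (rule PP_null[OF N(1)])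
  then have "AE p in lborel \<Otimes>\<^sub>M ?M2. u (ext j (fst p) (snd p)) = ub (ext j (fst p) (snd p))"
    unfolding PP_def by eventually_elim (use N(2) in auto)
  from PS.AE_pair[OF this] PS.AE_integrable_fst'[OF Pi]
  have "AE t in lborel. integrable (Mfib j) (\<lambda>z. u (ext j t z)) \<and> F t = (\<integral> z. u (ext j t z) \<partial>Mfib j)"
  proof eventually_elim
    case (elim t)
    have m1: "(\<lambda>z. ub (ext j t z)) \<in> borel_measurable ?M2"
      using measurable_Pair2[OF Pm, of t] by simp
    have m2: "(\<lambda>z. u (ext j t z)) \<in> borel_measurable (Mfib j)"
      unfolding Mfib_def by (rule completion_AE_measurable[OF m1]) (use elim in auto)
    have ae2: "AE z in Mfib j. u (ext j t z) = ub (ext j t z)"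
      unfolding Mfib_def using elim by (auto intro: AE_completion)
    have i1: "integrable (Mfib j) (\<lambda>z. ub (ext j t z))"
      unfolding Mfib_def using integrable_completion[OF m1] elim by simp
    have "integrable (Mfib j) (\<lambda>z. u (ext j t z))"
      by (rule integrable_cong_AE_imp[OF i1 m2]) (use ae2 in \<open>auto elim: AE_mp\<close>)
    moreover have "(\<integral> z. u (ext j t z) \<partial>Mfib j) = (\<integral> z. ub (ext j t z) \<partial>Mfib j)"
      by (rule integral_cong_AE[OF m2]) (use ae2 m1 in \<open>auto simp: Mfib_def intro: measurable_completion\<close>)
    moreover have "(\<integral> z. ub (ext j t z) \<partial>Mfib j) = F t"
      unfolding Mfib_def F_def by (rule integral_completion[OF m1])
    ultimately show ?case by simp
  qed
  with Fm Fi int1 int2 int3 show ?thesis by auto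
qed



locale lintr =
  fixes Jf Tf :: "real^'n::finite \<Rightarrow> real^'n" and k :: real
  assumes TJ: "\<And>x. Tf (Jf x) = x" and JT: "\<And>y. Jf (Tf y) = y"
    and Jm: "Jf \<in> lebesgue \<rightarrow>\<^sub>M lebesgue" and Tm: "Tf \<in> lebesgue \<rightarrow>\<^sub>M lebesgue"
    and D: "distr lebesgue lebesgue Jf = density lebesgue (\<lambda>_. ennreal k)" and kpos: "k > 0"
begin

lemma ind_eq: "indicator X (Tf y) = (indicator (Jf ` X) y :: 'b::zero_neq_one)"
proof -
  have "Tf y \<in> X \<longleftrightarrow> y \<in> Jf ` X"
    by (metis JT TJ image_iff)
  then show ?thesis by (simp add: indicator_def)
qed

lemma ind_eq2: "indicator (Jf ` X) (Jf x) = (indicator X x :: 'b::zero_neq_one)"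
  by (metis TJ ind_eq)

lemma tr_meas:
  fixes v :: "real^'n \<Rightarrow> real"
  assumes X: "X \<in> sets lebesgue" and v: "v \<in> borel_measurable (lebesgue_on X)"
  shows "(\<lambda>y. indicator (Jf ` X) y * v (Tf y)) \<in> borel_measurable lebesgue"
proof -
  have "(\<lambda>x. indicator X x *\<^sub>R v x) \<in> borel_measurable lebesgue"
    using v X by (subst (asm) borel_measurable_restrict_space_iff) auto
  from measurable_compose[OF Tm this]
  show ?thesis by (simp add: ind_eq)
qed

lemma tr_nn:
  fixes v :: "real^'n \<Rightarrow> real"
  assumes X: "X \<in> sets lebesgue" and v: "v \<in> borel_measurable (lebesgue_on X)"
  shows "(\<integral>\<^sup>+x. ennreal (v x) \<partial>lebesgue_on X) = ennreal k * (\<integral>\<^sup>+y. ennreal (indicator (Jf ` X) y * v (Tf y)) \<partial>lebesgue)"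
proof -
  have m: "(\<lambda>y. ennreal (indicator (Jf ` X) y * v (Tf y))) \<in> borel_measurable lebesgue"
    using tr_meas[OF X v] by simp
  have "(\<integral>\<^sup>+x. ennreal (v x) \<partial>lebesgue_on X) = (\<integral>\<^sup>+x. ennreal (v x) * indicator X x \<partial>lebesgue)"
    using X by (subst nn_integral_restrict_space) auto
  also have "\<dots> = (\<integral>\<^sup>+x. ennreal (indicator (Jf ` X) (Jf x) * v (Tf (Jf x))) \<partial>lebesgue)"
    by (intro nn_integral_cong) (simp add: ind_eq2 TJ split: split_indicator)
  also have "\<dots> = (\<integral>\<^sup>+y. ennreal (indicator (Jf ` X) y * v (Tf y)) \<partial>distr lebesgue lebesgue Jf)"
    using Jm m by (simp add: nn_integral_distr)
  also have "\<dots> = (\<integral>\<^sup>+y. ennreal k * ennreal (indicator (Jf ` X) y * v (Tf y)) \<partial>lebesgue)"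
    unfolding D by (rule nn_integral_density) (use m in auto)
  also have "\<dots> = ennreal k * (\<integral>\<^sup>+y. ennreal (indicator (Jf ` X) y * v (Tf y)) \<partial>lebesgue)"
    by (rule nn_integral_cmult) (use m in auto)
  finally show ?thesis .
qed

lemma tr_int:
  fixes v :: "real^'n \<Rightarrow> real"
  assumes X: "X \<in> sets lebesgue" and v: "integrable (lebesgue_on X) v"
  shows "integrable lebesgue (\<lambda>y. indicator (Jf ` X) y * v (Tf y))"
    and "(\<integral>x. v x \<partial>lebesgue_on X) = k * (\<integral>y. indicator (Jf ` X) y * v (Tf y) \<partial>lebesgue)"
proof -
  let ?v0 = "\<lambda>y. indicator (Jf ` X) y * v (Tf y)"
  have vm: "v \<in> borel_measurable (lebesgue_on X)" using v by auto
  have m: "?v0 \<in> borel_measurable lebesgue" using tr_meas[OF X vm] .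
  have eq: "(\<lambda>x. indicator X x *\<^sub>R v x) = (\<lambda>x. ?v0 (Jf x))"
    by (rule ext) (simp add: ind_eq2 TJ)
  have i1: "integrable lebesgue (\<lambda>x. ?v0 (Jf x))"
  proof -
    have "integrable lebesgue (\<lambda>x. indicator X x *\<^sub>R v x)"
      using v X by (subst (asm) integrable_restrict_space) auto
    then show ?thesis unfolding eq .
  qed
  have "integrable (distr lebesgue lebesgue Jf) ?v0"
    using i1 by (subst integrable_distr_eq[OF Jm m])
  then have "integrable lebesgue (\<lambda>y. k *\<^sub>R ?v0 y)"
    unfolding D by (subst (asm) integrable_density) (use m kpos in auto)
  then have "integrable lebesgue (\<lambda>y. (1/k) * (k * ?v0 y))" by (intro integrable_mult_right) simp
  then show "integrable lebesgue ?v0" using kpos by simp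
  have "(\<integral>x. v x \<partial>lebesgue_on X) = (\<integral>x. ?v0 (Jf x) \<partial>lebesgue)"
    using X by (subst integral_restrict_space) (auto simp only: eq)
  also have "\<dots> = (\<integral>y. ?v0 y \<partial>distr lebesgue lebesgue Jf)"
    by (rule integral_distr[symmetric, OF Jm m])
  also have "\<dots> = (\<integral>y. k *\<^sub>R ?v0 y \<partial>lebesgue)"
    unfolding D by (rule integral_density) (use m kpos in auto)
  also have "\<dots> = k * (\<integral>y. ?v0 y \<partial>lebesgue)" by simp
  finally show "(\<integral>x. v x \<partial>lebesgue_on X) = k * (\<integral>y. ?v0 y \<partial>lebesgue)" .
qed

end

lemma lintr_exists:
  fixes a :: "'n::finite \<Rightarrow> real^'n"
  assumes inv: "invertible (Jmat a)"
  shows "\<exists>k. lintr (\<lambda>x. Jmat a *v x) (\<lambda>y. matrix_inv (Jmat a) *v y) k"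
proof -
  have mi: "Jmat a ** matrix_inv (Jmat a) = mat 1 \<and> matrix_inv (Jmat a) ** Jmat a = mat 1"
    using inv unfolding invertible_def matrix_inv_def by (rule someI_ex)
  have TJ: "matrix_inv (Jmat a) *v (Jmat a *v x) = x" for x
    using mi by (simp add: matrix_vector_mul_assoc)
  have JT: "Jmat a *v (matrix_inv (Jmat a) *v y) = y" for y
    using mi by (simp add: matrix_vector_mul_assoc)
  obtain k where k: "k > 0" "(\<lambda>x. Jmat a *v x) \<in> lebesgue \<rightarrow>\<^sub>M lebesgue"
    "distr lebesgue lebesgue (\<lambda>x. Jmat a *v x) = density lebesgue (\<lambda>_. ennreal k)"
    using lebesgue_linear_distr[of "\<lambda>x. Jmat a *v x" "\<lambda>y. matrix_inv (Jmat a) *v y"] TJ JT by auto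
  obtain k' where k': "(\<lambda>y. matrix_inv (Jmat a) *v y) \<in> lebesgue \<rightarrow>\<^sub>M lebesgue"
    using lebesgue_linear_distr[of "\<lambda>y. matrix_inv (Jmat a) *v y" "\<lambda>x. Jmat a *v x"] TJ JT by auto
  show ?thesis
    by (rule exI[of _ k], unfold_locales) (use k k' TJ JT in auto)
qed



lemma L2_mult:
  assumes "L2 X u" "L2 X v"
  shows "integrable (lebesgue_on X) (\<lambda>x. u x * v x)"
proof (rule Bochner_Integration.integrable_bound)
  show "integrable (lebesgue_on X) (\<lambda>x. (u x)^2 + (v x)^2)"
    using assms unfolding L2_def by auto
  show "(\<lambda>x. u x * v x) \<in> borel_measurable (lebesgue_on X)"
    using assms unfolding L2_def by auto
  show "AE x in lebesgue_on X. norm (u x * v x) \<le> norm ((u x)^2 + (v x)^2)"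
  proof (rule AE_I2)
    fix x
    have "0 \<le> (\<bar>u x\<bar> - \<bar>v x\<bar>)^2" by simp
    then have "2 * (\<bar>u x\<bar> * \<bar>v x\<bar>) \<le> (u x)^2 + (v x)^2"
      by (simp add: power2_diff)
    moreover have "0 \<le> (u x)^2 + (v x)^2" by simp
    moreover have "0 \<le> \<bar>u x\<bar> * \<bar>v x\<bar>" by simp
    ultimately have "\<bar>u x\<bar> * \<bar>v x\<bar> \<le> (u x)^2 + (v x)^2" by linarith
    then show "norm (u x * v x) \<le> norm ((u x)^2 + (v x)^2)"
      by (simp add: abs_mult)
  qed
qed

lemma L2_sq: "L2 X u \<Longrightarrow> integrable (lebesgue_on X) (\<lambda>x. (u x)^2)"
  by (simp add: L2_def)

lemma L2_meas: "L2 X u \<Longrightarrow> u \<in> borel_measurable (lebesgue_on X)"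
  by (simp add: L2_def)

lemma L2_add:
  assumes "L2 X u" "L2 X v" shows "L2 X (\<lambda>x. u x + v x)"
proof -
  have "integrable (lebesgue_on X) (\<lambda>x. (u x)^2 + (v x)^2 + 2 * (u x * v x))"
    using assms L2_mult[OF assms] unfolding L2_def
    by (intro Bochner_Integration.integrable_add integrable_mult_right) auto
  moreover have "(\<lambda>x. (u x + v x)^2) = (\<lambda>x. (u x)^2 + (v x)^2 + 2 * (u x * v x))"
    by (rule ext) (simp add: power2_sum)
  ultimately show ?thesis using assms by (auto simp: L2_def)
qed

lemma L2_cmult:
  assumes "L2 X u" shows "L2 X (\<lambda>x. c * u x)"
proof -
  have "integrable (lebesgue_on X) (\<lambda>x. c^2 * (u x)^2)"
    using assms by (auto simp: L2_def)
  then show ?thesis using assms by (auto simp: L2_def power_mult_distrib)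
qed

lemma L2_zero: "L2 X (\<lambda>x. 0)"
  by (simp add: L2_def)

lemma L2_diff:
  assumes "L2 X u" "L2 X v" shows "L2 X (\<lambda>x. u x - v x)"
  using L2_add[OF assms(1) L2_cmult[OF assms(2), of "-1"]] by simp

lemma L2_sum:
  assumes "\<And>i. i \<in> I \<Longrightarrow> L2 X (u i)" shows "L2 X (\<lambda>x. \<Sum>i\<in>I. u i x)"
  using assms
proof (induction I rule: infinite_finite_induct)
  case (infinite A) then show ?case by (simp add: L2_zero)
next
  case empty then show ?case by (simp add: L2_zero)
next
  case (insert i A)
  then show ?case by (simp add: L2_add)
qed

lemma best_approx_iff_orth:
  assumes f: "L2 X f" and RL2: "\<And>\<psi>. \<psi> \<in> R \<Longrightarrow> L2 X \<psi>" and h: "h \<in> R"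
    and V: "\<And>\<phi>. \<phi> \<in> V \<Longrightarrow> L2 X \<phi>"
    and cl: "\<And>\<phi> s. \<phi> \<in> V \<Longrightarrow> (\<lambda>x. h x + s * \<phi> x) \<in> R"
    and span: "\<And>\<psi>. \<psi> \<in> R \<Longrightarrow> (\<forall>\<phi>\<in>V. (\<integral>x. (f x - h x) * \<phi> x \<partial>lebesgue_on X) = 0)
                   \<Longrightarrow> (\<integral>x. (f x - h x) * \<psi> x \<partial>lebesgue_on X) = 0"
  shows "best_approx X R f h \<longleftrightarrow> (\<forall>\<phi>\<in>V. (\<integral>x. (f x - h x) * \<phi> x \<partial>lebesgue_on X) = 0)"
proof -
  let ?M = "lebesgue_on X"
  define e where "e x = f x - h x" for x
  have e: "L2 X e" unfolding e_def by (rule L2_diff[OF f RL2[OF h]])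
  have expand: "(\<integral>x. (e x - s * \<phi> x)^2 \<partial>?M) = (\<integral>x. (e x)^2 \<partial>?M) - 2 * s * (\<integral>x. e x * \<phi> x \<partial>?M) + s^2 * (\<integral>x. (\<phi> x)^2 \<partial>?M)"
    if \<phi>: "L2 X \<phi>" for \<phi> s
  proof -
    have i1: "integrable ?M (\<lambda>x. (e x)^2)" using e by (rule L2_sq)
    have i2: "integrable ?M (\<lambda>x. e x * \<phi> x)" using L2_mult[OF e \<phi>] .
    have i3: "integrable ?M (\<lambda>x. (\<phi> x)^2)" using \<phi> by (rule L2_sq)
    have "(\<lambda>x. (e x - s * \<phi> x)^2) = (\<lambda>x. ((e x)^2 - (2 * s) * (e x * \<phi> x)) + s^2 * (\<phi> x)^2)"
      by (rule ext) (simp add: power2_eq_square algebra_simps)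
    then have "(\<integral>x. (e x - s * \<phi> x)^2 \<partial>?M) = (\<integral>x. ((e x)^2 - (2 * s) * (e x * \<phi> x)) + s^2 * (\<phi> x)^2 \<partial>?M)"
      by simp
    also have "\<dots> = (\<integral>x. (e x)^2 - (2 * s) * (e x * \<phi> x) \<partial>?M) + (\<integral>x. s^2 * (\<phi> x)^2 \<partial>?M)"
      by (rule Bochner_Integration.integral_add) (use i1 i2 i3 in auto)
    also have "(\<integral>x. (e x)^2 - (2 * s) * (e x * \<phi> x) \<partial>?M) = (\<integral>x. (e x)^2 \<partial>?M) - (\<integral>x. (2 * s) * (e x * \<phi> x) \<partial>?M)"
      by (rule Bochner_Integration.integral_diff) (use i1 i2 in auto)
    finally show ?thesis by simp
  qed
  have dist: "L2_dist X f u = sqrt (\<integral>x. (e x - (u x - h x))^2 \<partial>?M)" for u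
    unfolding L2_dist_def e_def by (simp add: algebra_simps)
  show ?thesis
  proof
    assume best: "best_approx X R f h"
    show "\<forall>\<phi>\<in>V. (\<integral>x. (f x - h x) * \<phi> x \<partial>?M) = 0"
    proof
      fix \<phi> assume \<phi>V: "\<phi> \<in> V"
      have \<phi>: "L2 X \<phi>" using V[OF \<phi>V] .
      define c where "c = (\<integral>x. e x * \<phi> x \<partial>?M)"
      define d where "d = (\<integral>x. (\<phi> x)^2 \<partial>?M)"
      have d0: "d \<ge> 0" unfolding d_def by (rule integral_nonneg_AE) auto
      define s where "s = c / (d + 1)"
      have "L2_dist X f h \<le> L2_dist X f (\<lambda>x. h x + s * \<phi> x)"
        using best cl[OF \<phi>V] unfolding best_approx_def by blast
      then have "sqrt (\<integral>x. (e x - 0)^2 \<partial>?M) \<le> sqrt (\<integral>x. (e x - s * \<phi> x)^2 \<partial>?M)"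
        unfolding dist by simp
      then have "(\<integral>x. (e x)^2 \<partial>?M) \<le> (\<integral>x. (e x)^2 \<partial>?M) - 2 * s * c + s^2 * d"
        unfolding expand[OF \<phi>] c_def d_def by simp
      then have le: "2 * s * c \<le> s^2 * d" by simp
      have "c = 0"
      proof (rule ccontr)
        assume "c \<noteq> 0"
        have "2 * s * c = 2 * c^2 / (d + 1)" unfolding s_def by (simp add: power2_eq_square)
        moreover have "s^2 * d = c^2 * d / (d+1)^2" unfolding s_def by (simp add: power_divide)
        moreover have "c^2 * d / (d+1)^2 < 2 * c^2 / (d + 1)"
        proof -
          have cp: "c^2 > 0" using \<open>c \<noteq> 0\<close> by simp
          have "c^2 * d / (d+1)^2 = (c^2 / (d+1)) * (d / (d+1))" by (simp add: power2_eq_square)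
          also have "\<dots> < (c^2 / (d+1)) * 2"
            using cp d0 by (intro mult_strict_left_mono) (auto simp: divide_less_eq)
          finally show ?thesis by (simp add: mult.commute)
        qed
        ultimately show False using le by linarith
      qed
      then show "(\<integral>x. (f x - h x) * \<phi> x \<partial>?M) = 0" unfolding c_def e_def .
    qed
  next
    assume orth: "\<forall>\<phi>\<in>V. (\<integral>x. (f x - h x) * \<phi> x \<partial>?M) = 0"
    show "best_approx X R f h"
      unfolding best_approx_def
    proof (intro conjI ballI h)
      fix h' assume h': "h' \<in> R"
      have L: "L2 X (\<lambda>x. h' x - h x)" by (rule L2_diff[OF RL2[OF h'] RL2[OF h]])
      have z1: "(\<integral>x. e x * h' x \<partial>?M) = 0" using span[OF h' orth] unfolding e_def .
      have z2: "(\<integral>x. e x * h x \<partial>?M) = 0" using span[OF h orth] unfolding e_def .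
      have "(\<integral>x. e x * (h' x - h x) \<partial>?M) = (\<integral>x. e x * h' x - e x * h x \<partial>?M)"
        by (simp add: algebra_simps)
      also have "\<dots> = 0" using z1 z2 L2_mult[OF e RL2[OF h']] L2_mult[OF e RL2[OF h]] by simp
      finally have z: "(\<integral>x. e x * (h' x - h x) \<partial>?M) = 0" .
      have nn: "0 \<le> (\<integral>x. (h' x - h x)^2 \<partial>?M)" by (rule integral_nonneg_AE) auto
      have "(\<integral>x. (e x - 0)^2 \<partial>?M) \<le> (\<integral>x. (e x - 1 * (h' x - h x))^2 \<partial>?M)"
        unfolding expand[OF L] using z nn by simp
      then show "L2_dist X f h \<le> L2_dist X f h'"
        unfolding dist by simp
    qed
  qed
qed



locale S24 =
  fixes X :: "(real^'n::finite) set" and I :: "'n set" and a :: "'n \<Rightarrow> real^'n"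
    and w :: "'n \<Rightarrow> real^'n \<Rightarrow> real" and f :: "real^'n \<Rightarrow> real"
    and g0 :: "'n \<Rightarrow> real \<Rightarrow> real" and Y0 :: "('n \<Rightarrow> real) set"
  assumes X_meas: "X \<in> sets lebesgue"
    and basis: "invertible (Jmat a)"
    and w_L2: "\<forall>i\<in>I. L2 X (w i)"
    and rset: "(\<lambda>x. Jmat a *v x) ` X =
       {y. (\<forall>i\<in>I. y $ i \<in> proj_set X a i) \<and> restrict (\<lambda>k. y $ k) (- I) \<in> Y0}"
    and f_L2: "L2 X f"
    and g0_L2: "\<forall>i\<in>I. L2 X (\<lambda>x. w i x * g0 i (a i \<bullet> x))"
    and W_pos: "\<forall>j\<in>I. AE t in lborel. t \<in> proj_set X a j \<longrightarrow>
       0 < (\<integral>\<^sup>+ z. indicator (fibre_set I (proj_set X a) Y0 j) z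
                  * ennreal ((ustar a (w j) (ext j t z))^2) \<partial>Mfib j)
     \<and> (\<integral>\<^sup>+ z. indicator (fibre_set I (proj_set X a) Y0 j) z
                  * ennreal ((ustar a (w j) (ext j t z))^2) \<partial>Mfib j) < \<infinity>"
begin

definition "Jf = (\<lambda>x. Jmat a *v x)"
definition "Tf = (\<lambda>y. matrix_inv (Jmat a) *v y)"
definition "kk = (SOME k. lintr Jf Tf k)"
definition "h = (\<lambda>x. \<Sum>i\<in>I. w i x * g0 i (a i \<bullet> x))"

lemma LT: "lintr Jf Tf kk"
  unfolding kk_def Jf_def Tf_def using lintr_exists[OF basis] by (rule someI_ex)

lemma Jf_nth: "Jf x $ i = a i \<bullet> x"
  by (simp add: Jf_def Jmat_def matrix_vector_mul_component)

lemma a_Tf: "a i \<bullet> Tf y = y $ i"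
  using Jf_nth[of "Tf y" i] lintr.JT[OF LT] by simp

lemma ustar_Tf: "ustar a u y = u (Tf y)"
  by (simp add: ustar_def Tf_def)

lemma finI: "finite I" by simp

lemma ind_split:
  assumes j: "j \<in> I"
  shows "indicator (Jf ` X) (ext j t z) = (indicator (proj_set X a j) t * indicator (fibre_set I (proj_set X a) Y0 j) z :: real)"
proof -
  have r: "restrict (\<lambda>k. ext j t z $ k) (- I) = restrict z (- I)"
    using j by (auto simp: restrict_def ext_nth)
  have "ext j t z \<in> Jf ` X \<longleftrightarrow> t \<in> proj_set X a j \<and> z \<in> fibre_set I (proj_set X a) Y0 j"
  proof -
    have A: "(\<forall>i\<in>I. ext j t z $ i \<in> proj_set X a i) \<longleftrightarrow> t \<in> proj_set X a j \<and> (\<forall>k\<in>I - {j}. z k \<in> proj_set X a k)"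
    proof
      assume L: "\<forall>i\<in>I. ext j t z $ i \<in> proj_set X a i"
      show "t \<in> proj_set X a j \<and> (\<forall>k\<in>I - {j}. z k \<in> proj_set X a k)"
      proof
        show "t \<in> proj_set X a j" using L j by (metis ext_nth)
        show "\<forall>k\<in>I - {j}. z k \<in> proj_set X a k"
        proof
          fix k assume "k \<in> I - {j}" then show "z k \<in> proj_set X a k" using L by (metis DiffD1 DiffD2 ext_nth singletonI)
        qed
      qed
    next
      assume R: "t \<in> proj_set X a j \<and> (\<forall>k\<in>I - {j}. z k \<in> proj_set X a k)"
      show "\<forall>i\<in>I. ext j t z $ i \<in> proj_set X a i"
      proof
        fix i assume "i \<in> I" then show "ext j t z $ i \<in> proj_set X a i"
          using R by (cases "i = j") (simp_all add: ext_nth)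
      qed
    qed
    have "ext j t z \<in> Jf ` X \<longleftrightarrow> (\<forall>i\<in>I. ext j t z $ i \<in> proj_set X a i) \<and> restrict (\<lambda>k. ext j t z $ k) (- I) \<in> Y0"
      unfolding Jf_def rset by simp
    also have "\<dots> \<longleftrightarrow> t \<in> proj_set X a j \<and> z \<in> fibre_set I (proj_set X a) Y0 j"
      unfolding A r fibre_set_def by simp
    finally show ?thesis .
  qed
  then show ?thesis by (simp add: indicator_def)
qed

lemma h_L2: "L2 X h"
  unfolding h_def by (rule L2_sum) (use g0_L2 in auto)

lemma e_L2: "L2 X (\<lambda>x. f x - h x)"
  by (rule L2_diff[OF f_L2 h_L2])

lemma step1:
  "best_approx X (ridge_set X I a w) f h \<longleftrightarrow>
    (\<forall>j\<in>I. \<forall>g. L2 X (\<lambda>x. w j x * g (a j \<bullet> x)) \<longrightarrow> (\<integral>x. (f x - h x) * (w j x * g (a j \<bullet> x)) \<partial>lebesgue_on X) = 0)"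
proof -
  define V where "V = {\<phi>. \<exists>j\<in>I. \<exists>g. L2 X (\<lambda>x. w j x * g (a j \<bullet> x)) \<and> \<phi> = (\<lambda>x. w j x * g (a j \<bullet> x))}"
  have RL2: "L2 X \<psi>" if "\<psi> \<in> ridge_set X I a w" for \<psi>
    using that unfolding ridge_set_def by (auto intro!: L2_sum)
  have hR: "h \<in> ridge_set X I a w"
    unfolding ridge_set_def h_def using g0_L2 by blast
  have VL2: "L2 X \<phi>" if "\<phi> \<in> V" for \<phi> using that unfolding V_def by auto
  have cl: "(\<lambda>x. h x + s * \<phi> x) \<in> ridge_set X I a w" if "\<phi> \<in> V" for \<phi> s
  proof -
    obtain j g where j: "j \<in> I" and gL2: "L2 X (\<lambda>x. w j x * g (a j \<bullet> x))" and \<phi>: "\<phi> = (\<lambda>x. w j x * g (a j \<bullet> x))"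
      using \<open>\<phi> \<in> V\<close> unfolding V_def by blast
    define g' where "g' i t = g0 i t + (if i = j then s * g t else 0)" for i t
    have eq: "w i x * g' i (a i \<bullet> x) = w i x * g0 i (a i \<bullet> x) + (if i = j then s * (w j x * g (a j \<bullet> x)) else 0)" for i x
      by (simp add: g'_def algebra_simps)
    have "(\<lambda>x. h x + s * \<phi> x) = (\<lambda>x. \<Sum>i\<in>I. w i x * g' i (a i \<bullet> x))"
      by (rule ext) (simp add: eq sum.distrib h_def \<phi> j)
    moreover have "\<forall>i\<in>I. L2 X (\<lambda>x. w i x * g' i (a i \<bullet> x))"
    proof
      fix i assume i: "i \<in> I"
      show "L2 X (\<lambda>x. w i x * g' i (a i \<bullet> x))"
        unfolding eq
      proof (rule L2_add)
        show "L2 X (\<lambda>x. w i x * g0 i (a i \<bullet> x))" using g0_L2 i by blast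
        show "L2 X (\<lambda>x. if i = j then s * (w j x * g (a j \<bullet> x)) else 0)"
          by (cases "i = j") (simp_all add: L2_cmult[OF gL2] L2_zero)
      qed
    qed
    ultimately show ?thesis unfolding ridge_set_def by blast
  qed
  have span: "(\<integral>x. (f x - h x) * \<psi> x \<partial>lebesgue_on X) = 0"
    if \<psi>: "\<psi> \<in> ridge_set X I a w" and orth: "\<forall>\<phi>\<in>V. (\<integral>x. (f x - h x) * \<phi> x \<partial>lebesgue_on X) = 0" for \<psi>
  proof -
    obtain g where gL2: "\<forall>i\<in>I. L2 X (\<lambda>x. w i x * g i (a i \<bullet> x))" and \<psi>eq: "\<psi> = (\<lambda>x. \<Sum>i\<in>I. w i x * g i (a i \<bullet> x))"
      using \<psi> unfolding ridge_set_def by blast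
    have "(\<integral>x. (f x - h x) * \<psi> x \<partial>lebesgue_on X) = (\<integral>x. (\<Sum>i\<in>I. (f x - h x) * (w i x * g i (a i \<bullet> x))) \<partial>lebesgue_on X)"
      by (simp add: \<psi>eq sum_distrib_left)
    also have "\<dots> = (\<Sum>i\<in>I. (\<integral>x. (f x - h x) * (w i x * g i (a i \<bullet> x)) \<partial>lebesgue_on X))"
      by (rule Bochner_Integration.integral_sum) (use gL2 L2_mult[OF e_L2] in blast)
    also have "\<dots> = 0"
    proof (rule sum.neutral, rule ballI)
      fix i assume "i \<in> I"
      then have "(\<lambda>x. w i x * g i (a i \<bullet> x)) \<in> V" unfolding V_def using gL2 by blast
      from bspec[OF orth this]
      show "(\<integral>x. (f x - h x) * (w i x * g i (a i \<bullet> x)) \<partial>lebesgue_on X) = 0" by simp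
    qed
    finally show ?thesis .
  qed
  have "best_approx X (ridge_set X I a w) f h \<longleftrightarrow> (\<forall>\<phi>\<in>V. (\<integral>x. (f x - h x) * \<phi> x \<partial>lebesgue_on X) = 0)"
    by (rule best_approx_iff_orth[OF f_L2 RL2 hR VL2 cl span])
  also have "\<dots> \<longleftrightarrow> (\<forall>j\<in>I. \<forall>g. L2 X (\<lambda>x. w j x * g (a j \<bullet> x)) \<longrightarrow> (\<integral>x. (f x - h x) * (w j x * g (a j \<bullet> x)) \<partial>lebesgue_on X) = 0)"
  proof
    assume L: "\<forall>\<phi>\<in>V. (\<integral>x. (f x - h x) * \<phi> x \<partial>lebesgue_on X) = 0"
    show "\<forall>j\<in>I. \<forall>g. L2 X (\<lambda>x. w j x * g (a j \<bullet> x)) \<longrightarrow> (\<integral>x. (f x - h x) * (w j x * g (a j \<bullet> x)) \<partial>lebesgue_on X) = 0"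
    proof (intro ballI allI impI)
      fix j g assume "j \<in> I" "L2 X (\<lambda>x. w j x * g (a j \<bullet> x))"
      then have "(\<lambda>x. w j x * g (a j \<bullet> x)) \<in> V" unfolding V_def by blast
      from bspec[OF L this] show "(\<integral>x. (f x - h x) * (w j x * g (a j \<bullet> x)) \<partial>lebesgue_on X) = 0" by simp
    qed
  next
    assume R: "\<forall>j\<in>I. \<forall>g. L2 X (\<lambda>x. w j x * g (a j \<bullet> x)) \<longrightarrow> (\<integral>x. (f x - h x) * (w j x * g (a j \<bullet> x)) \<partial>lebesgue_on X) = 0"
    show "\<forall>\<phi>\<in>V. (\<integral>x. (f x - h x) * \<phi> x \<partial>lebesgue_on X) = 0"
    proof
      fix \<phi> assume "\<phi> \<in> V"
      then obtain j g where "j \<in> I" "L2 X (\<lambda>x. w j x * g (a j \<bullet> x))" "\<phi> = (\<lambda>x. w j x * g (a j \<bullet> x))"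
        unfolding V_def by blast
      then show "(\<integral>x. (f x - h x) * \<phi> x \<partial>lebesgue_on X) = 0" using R by simp
    qed
  qed
  finally show ?thesis .
qed

definition "Yj j = proj_set X a j"
definition "fib j = fibre_set I (proj_set X a) Y0 j"

lemma ind_split': "j \<in> I \<Longrightarrow> indicator (Jf ` X) (ext j t z) * c = (if t \<in> Yj j then indicator (fib j) z * c else (0::real))"
  using ind_split[of j t z] by (simp add: Yj_def fib_def)

lemma sec:
  fixes v :: "real^'n \<Rightarrow> real"
  assumes j: "j \<in> I" and v: "integrable (lebesgue_on X) v"
  shows "\<exists>F\<in>borel_measurable lborel. integrable lborel F \<and> (\<integral>x. v x \<partial>lebesgue_on X) = kk * (\<integral>t. F t \<partial>lborel)
     \<and> (AE t in lborel. (t \<in> Yj j \<longrightarrow> integrable (Mfib j) (\<lambda>z. indicator (fib j) z * v (Tf (ext j t z))))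
           \<and> F t = indicator (Yj j) t * (\<integral>z. indicator (fib j) z * v (Tf (ext j t z)) \<partial>Mfib j))"
proof -
  let ?v0 = "\<lambda>y. indicator (Jf ` X) y * v (Tf y)"
  have i0: "integrable lebesgue ?v0" and e0: "(\<integral>x. v x \<partial>lebesgue_on X) = kk * (\<integral>y. ?v0 y \<partial>lebesgue)"
    using lintr.tr_int[OF LT X_meas v] by auto
  obtain F where Fm: "F \<in> borel_measurable lborel" and Fi: "integrable lborel F"
    and Fe: "(\<integral>y. ?v0 y \<partial>lebesgue) = (\<integral>t. F t \<partial>lborel)"
    and Fae: "AE t in lborel. integrable (Mfib j) (\<lambda>z. ?v0 (ext j t z)) \<and> F t = (\<integral>z. ?v0 (ext j t z) \<partial>Mfib j)"
    using fub_int[OF i0, of j] by blast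
  have "AE t in lborel. (t \<in> Yj j \<longrightarrow> integrable (Mfib j) (\<lambda>z. indicator (fib j) z * v (Tf (ext j t z))))
           \<and> F t = indicator (Yj j) t * (\<integral>z. indicator (fib j) z * v (Tf (ext j t z)) \<partial>Mfib j)"
    using Fae
  proof eventually_elim
    case (elim t)
    show ?case
    proof (cases "t \<in> Yj j")
      case True
      then have "(\<lambda>z. ?v0 (ext j t z)) = (\<lambda>z. indicator (fib j) z * v (Tf (ext j t z)))"
        by (simp add: ind_split'[OF j])
      then show ?thesis using elim True by simp
    next
      case False
      then have "(\<lambda>z. ?v0 (ext j t z)) = (\<lambda>z. 0)"
        by (simp add: ind_split'[OF j])
      then show ?thesis using elim False by simp
    qed
  qed
  moreover have "(\<integral>x. v x \<partial>lebesgue_on X) = kk * (\<integral>t. F t \<partial>lborel)" using e0 Fe by simp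
  ultimately show ?thesis using Fm Fi by blast
qed

lemma sec_nn:
  fixes v :: "real^'n \<Rightarrow> real"
  assumes j: "j \<in> I" and v: "v \<in> borel_measurable (lebesgue_on X)"
  shows "\<exists>W\<in>borel_measurable lborel. (\<integral>\<^sup>+x. ennreal (v x) \<partial>lebesgue_on X) = kk * (\<integral>\<^sup>+t. W t \<partial>lborel)
     \<and> (AE t in lborel. (t \<in> Yj j \<longrightarrow> (\<lambda>z. ennreal (indicator (fib j) z * v (Tf (ext j t z)))) \<in> borel_measurable (Mfib j))
           \<and> W t = (if t \<in> Yj j then (\<integral>\<^sup>+z. ennreal (indicator (fib j) z * v (Tf (ext j t z))) \<partial>Mfib j) else 0))"
proof -
  let ?v0 = "\<lambda>y. indicator (Jf ` X) y * v (Tf y)"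
  have m0: "(\<lambda>y. ennreal (?v0 y)) \<in> borel_measurable lebesgue"
    using lintr.tr_meas[OF LT X_meas v] by simp
  have e0: "(\<integral>\<^sup>+x. ennreal (v x) \<partial>lebesgue_on X) = kk * (\<integral>\<^sup>+y. ennreal (?v0 y) \<partial>lebesgue)"
    using lintr.tr_nn[OF LT X_meas v] by simp
  obtain W where Wm: "W \<in> borel_measurable lborel"
    and We: "(\<integral>\<^sup>+y. ennreal (?v0 y) \<partial>lebesgue) = (\<integral>\<^sup>+t. W t \<partial>lborel)"
    and Wae: "AE t in lborel. (\<lambda>z. ennreal (?v0 (ext j t z))) \<in> borel_measurable (Mfib j) \<and> W t = (\<integral>\<^sup>+z. ennreal (?v0 (ext j t z)) \<partial>Mfib j)"
    using fub_nn[OF m0, of j] by blast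
  have "AE t in lborel. (t \<in> Yj j \<longrightarrow> (\<lambda>z. ennreal (indicator (fib j) z * v (Tf (ext j t z)))) \<in> borel_measurable (Mfib j))
           \<and> W t = (if t \<in> Yj j then (\<integral>\<^sup>+z. ennreal (indicator (fib j) z * v (Tf (ext j t z))) \<partial>Mfib j) else 0)"
    using Wae
  proof eventually_elim
    case (elim t)
    show ?case
    proof (cases "t \<in> Yj j")
      case True
      then have "(\<lambda>z. ennreal (?v0 (ext j t z))) = (\<lambda>z. ennreal (indicator (fib j) z * v (Tf (ext j t z))))"
        by (simp add: ind_split'[OF j])
      then show ?thesis using elim True by simp
    next
      case False
      then have "(\<lambda>z. ennreal (?v0 (ext j t z))) = (\<lambda>z. 0)"
        by (simp add: ind_split'[OF j])
      then show ?thesis using elim False by simp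
    qed
  qed
  moreover have "(\<integral>\<^sup>+x. ennreal (v x) \<partial>lebesgue_on X) = kk * (\<integral>\<^sup>+t. W t \<partial>lborel)" using e0 We by simp
  ultimately show ?thesis using Wm by blast
qed

definition "Ej j t = (\<integral>z. indicator (fib j) z * ((f (Tf (ext j t z)) - h (Tf (ext j t z))) * w j (Tf (ext j t z))) \<partial>Mfib j)"

lemma aj_ext: "a j \<bullet> Tf (ext j t z) = t"
  by (simp add: a_Tf ext_nth)

lemma Fg_ex:
  assumes j: "j \<in> I" and gL2: "L2 X (\<lambda>x. w j x * g (a j \<bullet> x))"
  shows "\<exists>F\<in>borel_measurable lborel. integrable lborel F
     \<and> (\<integral>x. (f x - h x) * (w j x * g (a j \<bullet> x)) \<partial>lebesgue_on X) = kk * (\<integral>t. F t \<partial>lborel)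
     \<and> (AE t in lborel. F t = indicator (Yj j) t * (g t * Ej j t))"
proof -
  have vi: "integrable (lebesgue_on X) (\<lambda>x. (f x - h x) * (w j x * g (a j \<bullet> x)))"
    by (rule L2_mult[OF e_L2 gL2])
  obtain F where Fm: "F \<in> borel_measurable lborel" and Fi: "integrable lborel F"
    and Fe: "(\<integral>x. (f x - h x) * (w j x * g (a j \<bullet> x)) \<partial>lebesgue_on X) = kk * (\<integral>t. F t \<partial>lborel)"
    and Fae0: "AE t in lborel. (t \<in> Yj j \<longrightarrow> integrable (Mfib j) (\<lambda>z. indicator (fib j) z * ((f (Tf (ext j t z)) - h (Tf (ext j t z))) * (w j (Tf (ext j t z)) * g (a j \<bullet> Tf (ext j t z))))))
          \<and> F t = indicator (Yj j) t * (\<integral>z. indicator (fib j) z * ((f (Tf (ext j t z)) - h (Tf (ext j t z))) * (w j (Tf (ext j t z)) * g (a j \<bullet> Tf (ext j t z)))) \<partial>Mfib j)"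
    using sec[OF j vi] by blast
  have Fae: "AE t in lborel. F t = indicator (Yj j) t * (\<integral>z. indicator (fib j) z * ((f (Tf (ext j t z)) - h (Tf (ext j t z))) * (w j (Tf (ext j t z)) * g (a j \<bullet> Tf (ext j t z)))) \<partial>Mfib j)"
    using Fae0 by eventually_elim blast
  have "AE t in lborel. F t = indicator (Yj j) t * (g t * Ej j t)"
    using Fae
  proof eventually_elim
    case (elim t)
    have "(\<lambda>z. indicator (fib j) z * ((f (Tf (ext j t z)) - h (Tf (ext j t z))) * (w j (Tf (ext j t z)) * g (a j \<bullet> Tf (ext j t z)))))
        = (\<lambda>z. g t * (indicator (fib j) z * ((f (Tf (ext j t z)) - h (Tf (ext j t z))) * w j (Tf (ext j t z)))))"
      by (rule ext) (simp add: aj_ext)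
    then show ?case using elim by (simp add: Ej_def)
  qed
  then show ?thesis using Fm Fi Fe by (intro bexI[of _ F] conjI)
qed

lemma per_j_if:
  assumes j: "j \<in> I" and ae: "AE t in lborel. t \<in> Yj j \<longrightarrow> Ej j t = 0"
  shows "\<forall>g. L2 X (\<lambda>x. w j x * g (a j \<bullet> x)) \<longrightarrow> (\<integral>x. (f x - h x) * (w j x * g (a j \<bullet> x)) \<partial>lebesgue_on X) = 0"
proof (intro allI impI)
  fix g assume gL2: "L2 X (\<lambda>x. w j x * g (a j \<bullet> x))"
  obtain F where Fe: "(\<integral>x. (f x - h x) * (w j x * g (a j \<bullet> x)) \<partial>lebesgue_on X) = kk * (\<integral>t. F t \<partial>lborel)"
    and Fae: "AE t in lborel. F t = indicator (Yj j) t * (g t * Ej j t)"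
    using Fg_ex[OF j gL2] by blast
  have "AE t in lborel. F t = 0"
    using Fae ae by eventually_elim (auto simp: indicator_def)
  then have "(\<integral>t. F t \<partial>lborel) = 0" by (rule integral_eq_zero_AE)
  then show "(\<integral>x. (f x - h x) * (w j x * g (a j \<bullet> x)) \<partial>lebesgue_on X) = 0" using Fe by simp
qed

lemma ind_ennreal: "indicator A z * ennreal c = ennreal (indicator A z * c)"
  by (simp split: split_indicator)

lemma per_j_only:
  assumes j: "j \<in> I"
    and orth: "\<forall>g. L2 X (\<lambda>x. w j x * g (a j \<bullet> x)) \<longrightarrow> (\<integral>x. (f x - h x) * (w j x * g (a j \<bullet> x)) \<partial>lebesgue_on X) = 0"
  shows "AE t in lborel. t \<in> Yj j \<longrightarrow> Ej j t = 0"
proof -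
  have wL2: "L2 X (w j)" using w_L2 j by blast
  have wm: "w j \<in> borel_measurable (lebesgue_on X)" using wL2 by (rule L2_meas)
  have vi: "integrable (lebesgue_on X) (\<lambda>x. (f x - h x) * w j x)"
    by (rule L2_mult[OF e_L2 wL2])
  obtain FE where FEm: "FE \<in> borel_measurable lborel" and FEi: "integrable lborel FE"
    and FEae0: "AE t in lborel. (t \<in> Yj j \<longrightarrow> integrable (Mfib j) (\<lambda>z. indicator (fib j) z * ((f (Tf (ext j t z)) - h (Tf (ext j t z))) * w j (Tf (ext j t z)))))
          \<and> FE t = indicator (Yj j) t * (\<integral>z. indicator (fib j) z * ((f (Tf (ext j t z)) - h (Tf (ext j t z))) * w j (Tf (ext j t z))) \<partial>Mfib j)"
    using sec[OF j vi] by blast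
  have FEae: "AE t in lborel. FE t = indicator (Yj j) t * Ej j t"
    using FEae0 by eventually_elim (simp add: Ej_def)
  have w2m: "(\<lambda>x. (w j x)^2) \<in> borel_measurable (lebesgue_on X)" using wm by measurable
  obtain Wb where Wbm: "Wb \<in> borel_measurable lborel"
    and Wbae: "AE t in lborel. (t \<in> Yj j \<longrightarrow> (\<lambda>z. ennreal (indicator (fib j) z * (w j (Tf (ext j t z)))^2)) \<in> borel_measurable (Mfib j))
           \<and> Wb t = (if t \<in> Yj j then (\<integral>\<^sup>+z. ennreal (indicator (fib j) z * (w j (Tf (ext j t z)))^2) \<partial>Mfib j) else 0)"
    using sec_nn[OF j w2m] by blast
  have kk: "kk > 0" using lintr.kpos[OF LT] .
  have key: "AE t in lborel. Wb t \<le> ennreal (real n) \<and> \<bar>FE t\<bar> \<le> real n \<longrightarrow> FE t = 0" for n :: nat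
  proof -
    define S where "S = {t. Wb t \<le> ennreal (real n) \<and> \<bar>FE t\<bar> \<le> real n}"
    have Wbb[measurable]: "Wb \<in> borel_measurable borel" using Wbm by simp
    have FEb[measurable]: "FE \<in> borel_measurable borel" using FEm by simp
    have Ssets[measurable]: "S \<in> sets borel" unfolding S_def by measurable
    define gM where "gM t = FE t * indicator S t" for t
    have gMb[measurable]: "gM \<in> borel_measurable borel" unfolding gM_def by measurable
    have gl: "(\<lambda>x. gM (a j \<bullet> x)) \<in> borel_measurable (lebesgue_on X)"
    proof -
      have "(\<lambda>x. gM (a j \<bullet> x)) \<in> borel_measurable borel" by measurable
      then have "(\<lambda>x. gM (a j \<bullet> x)) \<in> borel_measurable lborel" by simp
      then have "(\<lambda>x. gM (a j \<bullet> x)) \<in> borel_measurable lebesgue" by (rule measurable_completion)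
      then show ?thesis by (rule measurable_restrict_space1)
    qed
    have \<phi>m: "(\<lambda>x. w j x * gM (a j \<bullet> x)) \<in> borel_measurable (lebesgue_on X)"
      using wm gl by measurable
    have \<phi>2m: "(\<lambda>x. (w j x * gM (a j \<bullet> x))^2) \<in> borel_measurable (lebesgue_on X)"
      using \<phi>m by measurable
    obtain W2 where W2e: "(\<integral>\<^sup>+x. ennreal ((w j x * gM (a j \<bullet> x))^2) \<partial>lebesgue_on X) = kk * (\<integral>\<^sup>+t. W2 t \<partial>lborel)"
      and W2ae: "AE t in lborel. (t \<in> Yj j \<longrightarrow> (\<lambda>z. ennreal (indicator (fib j) z * (w j (Tf (ext j t z)) * gM (a j \<bullet> Tf (ext j t z)))^2)) \<in> borel_measurable (Mfib j))
           \<and> W2 t = (if t \<in> Yj j then (\<integral>\<^sup>+z. ennreal (indicator (fib j) z * (w j (Tf (ext j t z)) * gM (a j \<bullet> Tf (ext j t z)))^2) \<partial>Mfib j) else 0)"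
      using sec_nn[OF j \<phi>2m] by blast
    have W2bd: "AE t in lborel. W2 t \<le> ennreal (real n * real n * \<bar>FE t\<bar>)"
      using W2ae Wbae
    proof eventually_elim
      case (elim t)
      show ?case
      proof (cases "t \<in> Yj j")
        case False then show ?thesis using elim by simp
      next
        case True
        have m: "(\<lambda>z. ennreal (indicator (fib j) z * (w j (Tf (ext j t z)))^2)) \<in> borel_measurable (Mfib j)"
          using elim True by blast
        have "W2 t = (\<integral>\<^sup>+z. ennreal ((gM t)^2) * ennreal (indicator (fib j) z * (w j (Tf (ext j t z)))^2) \<partial>Mfib j)"
          using elim True
          by (simp add: aj_ext, intro nn_integral_cong) (simp add: ennreal_mult[symmetric] power_mult_distrib mult.commute mult.left_commute)
        also have "\<dots> = ennreal ((gM t)^2) * Wb t"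
          using elim True by (simp add: nn_integral_cmult[OF m])
        also have "\<dots> \<le> ennreal (real n * real n * \<bar>FE t\<bar>)"
        proof (cases "t \<in> S")
          case False then show ?thesis by (simp add: gM_def)
        next
          case inS: True
          then have Wn: "Wb t \<le> ennreal (real n)" and Fn: "\<bar>FE t\<bar> \<le> real n" by (auto simp: S_def)
          have "ennreal ((gM t)^2) * Wb t \<le> ennreal ((gM t)^2) * ennreal (real n)"
            using Wn by (rule mult_left_mono) simp
          also have "\<dots> = ennreal ((FE t)^2 * real n)" using inS by (simp add: gM_def ennreal_mult)
          also have "\<dots> \<le> ennreal (real n * real n * \<bar>FE t\<bar>)"
          proof (rule ennreal_leI)
            have "(FE t)^2 = \<bar>FE t\<bar> * \<bar>FE t\<bar>" by (simp add: power2_eq_square)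
            also have "\<dots> \<le> real n * \<bar>FE t\<bar>" using Fn by (intro mult_right_mono) auto
            finally show "(FE t)^2 * real n \<le> real n * real n * \<bar>FE t\<bar>"
              by (metis (no_types, opaque_lifting) mult.commute mult.left_commute mult_right_mono of_nat_0_le_iff)
          qed
          finally show ?thesis .
        qed
        finally show ?thesis .
      qed
    qed
    have int_nFE: "integrable lborel (\<lambda>t. real n * real n * \<bar>FE t\<bar>)" using FEi by auto
    have fin1: "(\<integral>\<^sup>+t. ennreal (real n * real n * \<bar>FE t\<bar>) \<partial>lborel) < \<infinity>"
      using integrableD(2)[OF int_nFE] by (simp add: abs_mult less_top)
    have "(\<integral>\<^sup>+t. W2 t \<partial>lborel) \<le> (\<integral>\<^sup>+t. ennreal (real n * real n * \<bar>FE t\<bar>) \<partial>lborel)"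
      by (rule nn_integral_mono_AE[OF W2bd])
    with fin1 have fin2: "(\<integral>\<^sup>+t. W2 t \<partial>lborel) < \<infinity>" by (simp add: le_less_trans)
    have fin3: "(\<integral>\<^sup>+x. ennreal ((w j x * gM (a j \<bullet> x))^2) \<partial>lebesgue_on X) < \<infinity>"
      unfolding W2e using fin2 by (simp add: ennreal_mult_less_top)
    have \<phi>L2: "L2 X (\<lambda>x. w j x * gM (a j \<bullet> x))"
      unfolding L2_def using \<phi>m integrableI_nonneg[OF \<phi>2m _ fin3] by auto
    obtain Fg where Fgm: "Fg \<in> borel_measurable lborel"
      and Fge: "(\<integral>x. (f x - h x) * (w j x * gM (a j \<bullet> x)) \<partial>lebesgue_on X) = kk * (\<integral>t. Fg t \<partial>lborel)"
      and Fgae: "AE t in lborel. Fg t = indicator (Yj j) t * (gM t * Ej j t)"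
      using Fg_ex[OF j \<phi>L2] by blast
    have "(\<integral>t. Fg t \<partial>lborel) = 0" using orth \<phi>L2 Fge kk by auto
    moreover have "AE t in lborel. Fg t = gM t * FE t"
      using Fgae FEae by eventually_elim simp
    ultimately have int0: "(\<integral>t. gM t * FE t \<partial>lborel) = 0"
      using Fgm by (subst (asm) integral_cong_AE[of Fg lborel "\<lambda>t. gM t * FE t"]) auto
    have iprod: "integrable lborel (\<lambda>t. gM t * FE t)"
    proof (rule Bochner_Integration.integrable_bound[of _ "\<lambda>t. real n * FE t"])
      show "integrable lborel (\<lambda>t. real n * FE t)" using FEi by auto
      show "(\<lambda>t. gM t * FE t) \<in> borel_measurable lborel" by simp
      show "AE t in lborel. norm (gM t * FE t) \<le> norm (real n * FE t)"
      proof (rule AE_I2)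
        fix t
        show "norm (gM t * FE t) \<le> norm (real n * FE t)"
        proof (cases "t \<in> S")
          case True
          then have "\<bar>FE t\<bar> \<le> real n" by (simp add: S_def)
          then have "\<bar>FE t\<bar> * \<bar>FE t\<bar> \<le> real n * \<bar>FE t\<bar>" by (rule mult_right_mono) simp
          then show ?thesis using True by (simp add: gM_def abs_mult)
        next
          case False then show ?thesis by (simp add: gM_def)
        qed
      qed
    qed
    have "AE t in lborel. gM t * FE t = 0"
      using integral_nonneg_eq_0_iff_AE[OF iprod] int0 by (simp add: gM_def indicator_def)
    then show ?thesis
      by eventually_elim (auto simp: gM_def S_def)
  qed
  then have allk: "AE t in lborel. \<forall>n::nat. Wb t \<le> ennreal (real n) \<and> \<bar>FE t\<bar> \<le> real n \<longrightarrow> FE t = 0"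
    unfolding AE_all_countable using key by blast
  have Wp: "AE t in lborel. t \<in> Yj j \<longrightarrow> (\<integral>\<^sup>+ z. indicator (fib j) z * ennreal ((ustar a (w j) (ext j t z))^2) \<partial>Mfib j) < \<infinity>"
    using W_pos j unfolding Yj_def fib_def by (auto elim: AE_mp)
  show ?thesis
    using allk FEae Wbae Wp
  proof eventually_elim
    case (elim t)
    show ?case
    proof
      assume t: "t \<in> Yj j"
      have "Wb t = (\<integral>\<^sup>+ z. indicator (fib j) z * ennreal ((ustar a (w j) (ext j t z))^2) \<partial>Mfib j)"
        using elim t by (simp add: ind_ennreal ustar_Tf)
      then have Wfin: "Wb t < \<infinity>" using elim t by simp
      define n where "n = nat \<lceil>max (enn2real (Wb t)) \<bar>FE t\<bar>\<rceil>"
      have c: "max (enn2real (Wb t)) \<bar>FE t\<bar> \<le> real n" unfolding n_def by (rule real_nat_ceiling_ge)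
      have "Wb t = ennreal (enn2real (Wb t))" using Wfin by simp
      also have "\<dots> \<le> ennreal (real n)"
        using c by (intro ennreal_leI) simp
      finally have "Wb t \<le> ennreal (real n)" .
      moreover have "\<bar>FE t\<bar> \<le> real n" using c by simp
      ultimately have "FE t = 0" using elim by blast
      then show "Ej j t = 0" using elim t by simp
    qed
  qed
qed

lemma eqn:
  assumes j: "j \<in> I"
  shows "AE t in lborel. t \<in> proj_set X a j \<longrightarrow> (Ej j t = 0 \<longleftrightarrow>
       g0 j t = (1 / enn2real (\<integral>\<^sup>+ z. indicator (fibre_set I (proj_set X a) Y0 j) z
                  * ennreal ((ustar a (w j) (ext j t z))^2) \<partial>Mfib j))
         * (\<integral> z. indicator (fibre_set I (proj_set X a) Y0 j) z
              * (ustar a f (ext j t z)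
                 - (\<Sum>i\<in>I - {j}. ustar a (w i) (ext j t z) * g0 i (ext j t z $ i)))
              * ustar a (w j) (ext j t z) \<partial>Mfib j))"
proof -
  have wL2: "L2 X (w j)" using w_L2 j by blast
  let ?r = "\<lambda>x. \<Sum>i\<in>I - {j}. w i x * g0 i (a i \<bullet> x)"
  have rL2: "L2 X ?r" by (rule L2_sum) (use g0_L2 in auto)
  have vA: "integrable (lebesgue_on X) (\<lambda>x. (f x - ?r x) * w j x)"
    by (rule L2_mult[OF L2_diff[OF f_L2 rL2] wL2])
  have vB: "integrable (lebesgue_on X) (\<lambda>x. (w j x)^2)" using wL2 by (rule L2_sq)
  obtain FA where FAae: "AE t in lborel. (t \<in> Yj j \<longrightarrow> integrable (Mfib j) (\<lambda>z. indicator (fib j) z * ((f (Tf (ext j t z)) - ?r (Tf (ext j t z))) * w j (Tf (ext j t z)))))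
          \<and> FA t = indicator (Yj j) t * (\<integral>z. indicator (fib j) z * ((f (Tf (ext j t z)) - ?r (Tf (ext j t z))) * w j (Tf (ext j t z))) \<partial>Mfib j)"
    using sec[OF j vA] by blast
  obtain FB where FBae: "AE t in lborel. (t \<in> Yj j \<longrightarrow> integrable (Mfib j) (\<lambda>z. indicator (fib j) z * (w j (Tf (ext j t z)))^2))
          \<and> FB t = indicator (Yj j) t * (\<integral>z. indicator (fib j) z * (w j (Tf (ext j t z)))^2 \<partial>Mfib j)"
    using sec[OF j vB] by blast
  have Wp: "AE t in lborel. t \<in> Yj j \<longrightarrow> 0 < (\<integral>\<^sup>+ z. indicator (fib j) z * ennreal ((ustar a (w j) (ext j t z))^2) \<partial>Mfib j)"
    using W_pos j unfolding Yj_def fib_def by (auto elim: AE_mp)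
  show ?thesis
    using FAae FBae Wp
  proof eventually_elim
    case (elim t)
    show ?case
    proof
      assume t: "t \<in> proj_set X a j"
      then have tY: "t \<in> Yj j" by (simp add: Yj_def)
      define A where "A z = indicator (fib j) z * ((f (Tf (ext j t z)) - ?r (Tf (ext j t z))) * w j (Tf (ext j t z)))" for z
      define B where "B z = indicator (fib j) z * (w j (Tf (ext j t z)))^2" for z
      have iA: "integrable (Mfib j) A" unfolding A_def using elim tY by blast
      have iB: "integrable (Mfib j) B" unfolding B_def using elim tY by blast
      have Bnn: "AE z in Mfib j. 0 \<le> B z" by (rule AE_I2) (simp add: B_def)
      have W: "(\<integral>\<^sup>+ z. indicator (fibre_set I (proj_set X a) Y0 j) z * ennreal ((ustar a (w j) (ext j t z))^2) \<partial>Mfib j)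
          = ennreal (\<integral>z. B z \<partial>Mfib j)"
      proof -
        have "(\<integral>\<^sup>+ z. indicator (fibre_set I (proj_set X a) Y0 j) z * ennreal ((ustar a (w j) (ext j t z))^2) \<partial>Mfib j)
           = (\<integral>\<^sup>+ z. ennreal (B z) \<partial>Mfib j)"
          by (simp add: B_def fib_def ind_ennreal ustar_Tf)
        also have "\<dots> = ennreal (\<integral>z. B z \<partial>Mfib j)" by (rule nn_integral_eq_integral[OF iB Bnn])
        finally show ?thesis .
      qed
      have Bpos: "0 < (\<integral>z. B z \<partial>Mfib j)"
        using elim tY W by (simp add: fib_def)
      have G: "(\<integral> z. indicator (fibre_set I (proj_set X a) Y0 j) z
              * (ustar a f (ext j t z)
                 - (\<Sum>i\<in>I - {j}. ustar a (w i) (ext j t z) * g0 i (ext j t z $ i)))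
              * ustar a (w j) (ext j t z) \<partial>Mfib j) = (\<integral>z. A z \<partial>Mfib j)"
        by (rule Bochner_Integration.integral_cong) (auto simp: A_def fib_def ustar_Tf a_Tf)
      have hsplit: "h (Tf (ext j t z)) = ?r (Tf (ext j t z)) + w j (Tf (ext j t z)) * g0 j t" for z
        unfolding h_def using j by (simp add: sum.remove[of I j] aj_ext)
      have E: "Ej j t = (\<integral>z. A z \<partial>Mfib j) - g0 j t * (\<integral>z. B z \<partial>Mfib j)"
      proof -
        have "Ej j t = (\<integral>z. A z - g0 j t * B z \<partial>Mfib j)"
          unfolding Ej_def by (rule Bochner_Integration.integral_cong) (auto simp: A_def B_def hsplit algebra_simps power2_eq_square)
        also have "\<dots> = (\<integral>z. A z \<partial>Mfib j) - (\<integral>z. g0 j t * B z \<partial>Mfib j)"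
          by (rule Bochner_Integration.integral_diff) (use iA iB in auto)
        finally show ?thesis by simp
      qed
      show "Ej j t = 0 \<longleftrightarrow>
       g0 j t = (1 / enn2real (\<integral>\<^sup>+ z. indicator (fibre_set I (proj_set X a) Y0 j) z
                  * ennreal ((ustar a (w j) (ext j t z))^2) \<partial>Mfib j))
         * (\<integral> z. indicator (fibre_set I (proj_set X a) Y0 j) z
              * (ustar a f (ext j t z)
                 - (\<Sum>i\<in>I - {j}. ustar a (w i) (ext j t z) * g0 i (ext j t z $ i)))
              * ustar a (w j) (ext j t z) \<partial>Mfib j)"
        unfolding W G E using Bpos by (auto simp: field_simps)
    qed
  qed
qed

lemma main:
  "best_approx X (ridge_set X I a w) f h \<longleftrightarrow>
    (\<forall>j\<in>I. AE t in lborel. t \<in> proj_set X a j \<longrightarrow>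
       g0 j t = (1 / enn2real (\<integral>\<^sup>+ z. indicator (fibre_set I (proj_set X a) Y0 j) z
                  * ennreal ((ustar a (w j) (ext j t z))^2) \<partial>Mfib j))
         * (\<integral> z. indicator (fibre_set I (proj_set X a) Y0 j) z
              * (ustar a f (ext j t z)
                 - (\<Sum>i\<in>I - {j}. ustar a (w i) (ext j t z) * g0 i (ext j t z $ i)))
              * ustar a (w j) (ext j t z) \<partial>Mfib j))"
  unfolding step1
proof (intro ball_cong refl)
  fix j assume j: "j \<in> I"
  have "(\<forall>g. L2 X (\<lambda>x. w j x * g (a j \<bullet> x)) \<longrightarrow> (\<integral>x. (f x - h x) * (w j x * g (a j \<bullet> x)) \<partial>lebesgue_on X) = 0)
       \<longleftrightarrow> (AE t in lborel. t \<in> proj_set X a j \<longrightarrow> Ej j t = 0)"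
    using per_j_if[OF j] per_j_only[OF j] by (auto simp: Yj_def)
  also have "\<dots> \<longleftrightarrow> (AE t in lborel. t \<in> proj_set X a j \<longrightarrow>
       g0 j t = (1 / enn2real (\<integral>\<^sup>+ z. indicator (fibre_set I (proj_set X a) Y0 j) z
                  * ennreal ((ustar a (w j) (ext j t z))^2) \<partial>Mfib j))
         * (\<integral> z. indicator (fibre_set I (proj_set X a) Y0 j) z
              * (ustar a f (ext j t z)
                 - (\<Sum>i\<in>I - {j}. ustar a (w i) (ext j t z) * g0 i (ext j t z $ i)))
              * ustar a (w j) (ext j t z) \<partial>Mfib j))"
    using eqn[OF j] by (intro AE_cong_simp iffI) (auto elim: AE_mp)
  finally show "(\<forall>g. L2 X (\<lambda>x. w j x * g (a j \<bullet> x)) \<longrightarrow> (\<integral>x. (f x - h x) * (w j x * g (a j \<bullet> x)) \<partial>lebesgue_on X) = 0)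
       \<longleftrightarrow> (AE t in lborel. t \<in> proj_set X a j \<longrightarrow>
       g0 j t = (1 / enn2real (\<integral>\<^sup>+ z. indicator (fibre_set I (proj_set X a) Y0 j) z
                  * ennreal ((ustar a (w j) (ext j t z))^2) \<partial>Mfib j))
         * (\<integral> z. indicator (fibre_set I (proj_set X a) Y0 j) z
              * (ustar a f (ext j t z)
                 - (\<Sum>i\<in>I - {j}. ustar a (w i) (ext j t z) * g0 i (ext j t z $ i)))
              * ustar a (w j) (ext j t z) \<partial>Mfib j))" .
qed

end


theorem theorem2p4:
  fixes X :: "(real^'n) set" and I :: "'n set" and a :: "'n \<Rightarrow> real^'n"
    and w :: "'n \<Rightarrow> real^'n \<Rightarrow> real" and f :: "real^'n \<Rightarrow> real"
    and g0 :: "'n \<Rightarrow> real \<Rightarrow> real" and Y0 :: "('n \<Rightarrow> real) set"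
  assumes X_meas: "X \<in> sets lebesgue" and X_fin: "emeasure lebesgue X < \<infinity>"
    and basis: "invertible (Jmat a)"
    and w_L2: "\<forall>i\<in>I. L2 X (w i)"
    and Y0_meas: "Y0 \<in> sets (completion (PiM (- I) (\<lambda>_. lborel)))"
    and rset: "(\<lambda>x. Jmat a *v x) ` X =
       {y. (\<forall>i\<in>I. y $ i \<in> proj_set X a i) \<and> restrict (\<lambda>k. y $ k) (- I) \<in> Y0}"
    and f_L2: "L2 X f"
    and g0_L2: "\<forall>i\<in>I. L2 X (\<lambda>x. w i x * g0 i (a i \<bullet> x))"
    and W_pos: "\<forall>j\<in>I. AE t in lborel. t \<in> proj_set X a j \<longrightarrow>
       0 < (\<integral>\<^sup>+ z. indicator (fibre_set I (proj_set X a) Y0 j) z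
                  * ennreal ((ustar a (w j) (ext j t z))^2) \<partial>Mfib j)
     \<and> (\<integral>\<^sup>+ z. indicator (fibre_set I (proj_set X a) Y0 j) z
                  * ennreal ((ustar a (w j) (ext j t z))^2) \<partial>Mfib j) < \<infinity>"
  shows "best_approx X (ridge_set X I a w) f (\<lambda>x. \<Sum>i\<in>I. w i x * g0 i (a i \<bullet> x)) \<longleftrightarrow>
    (\<forall>j\<in>I. AE t in lborel. t \<in> proj_set X a j \<longrightarrow>
       g0 j t = (1 / enn2real (\<integral>\<^sup>+ z. indicator (fibre_set I (proj_set X a) Y0 j) z
                  * ennreal ((ustar a (w j) (ext j t z))^2) \<partial>Mfib j))
         * (\<integral> z. indicator (fibre_set I (proj_set X a) Y0 j) z
              * (ustar a f (ext j t z)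
                 - (\<Sum>i\<in>I - {j}. ustar a (w i) (ext j t z) * g0 i (ext j t z $ i)))
              * ustar a (w j) (ext j t z) \<partial>Mfib j))"
proof -
  interpret S24 X I a w f g0 Y0
    by unfold_locales (use X_meas basis w_L2 rset f_L2 g0_L2 W_pos in auto)
  show ?thesis using main unfolding h_def .
qed

end
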